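(* Let $n\ge1$, $\mathfrak g=sl(n+1,\mathbb C)$, $a\in\mathbb C$ and $m(a)=-\tfrac12(a+n+1)$. Then the map $\rho_a$ defined by $\rho_a(X)=W\big(i\tilde X+\tfrac12 a\varphi_1(X)\big)$ for $X\in\mathfrak g$ is a representation of $\mathfrak g$ on $\mathcal P=\mathbb C[z_1,\dots,z_n]$, and for $f\in\mathcal P$, $1\le k\le n$ and $1\le i\ne j\le n$: $$(\rho_a(H_k)f)(z)=m(a)f(z)-z_k\partial_{z_k}f-\sum_{j=1}^n z_j\partial_{z_j}f,\qquad (\rho_a(E_{1,k+1})f)(z)=-m(a)z_kf(z)+z_k\sum_{j=1}^nz_j\partial_{z_j}f,$$ $$(\rho_a(E_{k+1,1})f)(z)=-\partial_{z_k}f,\qquad (\rho_a(E_{i+1,j+1})f)(z)=-z_j\partial_{z_i}f.$$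
   Context: $E_{ij}$ is the $(n+1)\times(n+1)$ matrix with $1$ in entry $(i,j)$ and $0$ elsewhere, and $H_k=E_{k+1,k+1}-E_{11}$. Let $\Psi(p,q)$ be the $(n+1)\times(n+1)$ matrix whose first row is $(-\sum_j p_jq_j,\ q_1,\dots,q_n)$ and whose $(k+1)$-th row ($1\le k\le n$) is $p_k$ times the first row; for $X\in\mathfrak g$, $\tilde X(p,q)=\operatorname{Tr}(\Psi(p,q)X)\in\mathbb C[p,q]$. The linear map $\varphi_1:\mathfrak g\to\mathbb C[p,q]$ is determined by $\varphi_1(E_{11}-E_{22})=1$, $\varphi_1(E_{kk}-E_{k+1,k+1})=0$ for $k=2,\dots,n$, $\varphi_1(E_{1,k+1})=p_k$ for $k=1,\dots,n$, and $\varphi_1(E_{ij})=0$ for $i\ge2$, $j\neq i$. The Weyl correspondence $W$ sends polynomials in $(p,q)$ to linear operators on polynomials $\varphi(p)$, defined by linearity from $(W(u(p)q^\alpha)\varphi)(p)=(i\partial_s)^\alpha\big(u(p+\tfrac12s)\varphi(p+s)\big)|_{s=0}$ for a polynomial $u$ and $\alpha\in\mathbb N^n$; the resulting operators are regarded as acting on $\mathcal P$ by renaming the variable $p$ as $z$. *)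

theory Defs
  imports Complex_Main "HOL-Library.Poly_Mapping"
begin

text \<open>A polynomial in variables indexed by type 'v is a finitely supported map from
  monomials (finitely supported exponent vectors) to complex coefficients;
  the multiplication of the library type is the convolution product.\<close>

type_synonym 'v mpoly = "('v \<Rightarrow>\<^sub>0 nat) \<Rightarrow>\<^sub>0 complex"

definition Var :: "'v \<Rightarrow> 'v mpoly" where
  "Var v = Poly_Mapping.single (Poly_Mapping.single v 1) 1"

definition Const :: "complex \<Rightarrow> 'v mpoly" where
  "Const c = Poly_Mapping.single 0 c"

definition pd :: "'v \<Rightarrow> 'v mpoly \<Rightarrow> 'v mpoly" where
  "pd v F = (\<Sum>m\<in>Poly_Mapping.keys F.
      Poly_Mapping.single (m - Poly_Mapping.single v (1::nat))
        (Poly_Mapping.lookup F m * of_nat (Poly_Mapping.lookup (m :: 'v \<Rightarrow>\<^sub>0 nat) v)))"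

definition subst :: "('v \<Rightarrow> 'w mpoly) \<Rightarrow> 'v mpoly \<Rightarrow> 'w mpoly" where
  "subst \<sigma> F = (\<Sum>m\<in>Poly_Mapping.keys F. Const (Poly_Mapping.lookup F m) * (\<Prod>v\<in>Poly_Mapping.keys m. \<sigma> v ^ Poly_Mapping.lookup m v))"

text \<open>The representation space P = C[z_1,...,z_n]: polynomials in variables indexed by nat,
  involving only the variables 1..n.\<close>
definition Pspace :: "nat \<Rightarrow> nat mpoly set" where
  "Pspace n = {f. \<forall>m\<in>Poly_Mapping.keys f. Poly_Mapping.keys m \<subseteq> {1..n}}"

text \<open>Polynomials in (p,q): variable Inl k is p_k and Inr k is q_k (k = 1..n).\<close>
abbreviation pv :: "nat \<Rightarrow> (nat + nat) mpoly" where "pv k \<equiv> Var (Inl k)"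
abbreviation qv :: "nat \<Rightarrow> (nat + nat) mpoly" where "qv k \<equiv> Var (Inr k)"

text \<open>Matrices are functions nat => nat => complex with indices 1..n+1 (entries outside are 0).\<close>
type_synonym cmat = "nat \<Rightarrow> nat \<Rightarrow> complex"

definition sl :: "nat \<Rightarrow> cmat set" where
  "sl n = {X. (\<forall>i j. (i \<notin> {1..n+1} \<or> j \<notin> {1..n+1}) \<longrightarrow> X i j = 0)
              \<and> (\<Sum>i=1..n+1. X i i) = 0}"

definition E :: "nat \<Rightarrow> nat \<Rightarrow> cmat" where
  "E i j = (\<lambda>a b. if a = i \<and> b = j then 1 else 0)"

definition madd :: "cmat \<Rightarrow> cmat \<Rightarrow> cmat" where
  "madd X Y = (\<lambda>i j. X i j + Y i j)"

definition msub :: "cmat \<Rightarrow> cmat \<Rightarrow> cmat" where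
  "msub X Y = (\<lambda>i j. X i j - Y i j)"

definition msmult :: "complex \<Rightarrow> cmat \<Rightarrow> cmat" where
  "msmult c X = (\<lambda>i j. c * X i j)"

definition mmult :: "nat \<Rightarrow> cmat \<Rightarrow> cmat \<Rightarrow> cmat" where
  "mmult n X Y = (\<lambda>i j. \<Sum>k=1..n+1. X i k * Y k j)"

definition bracket :: "nat \<Rightarrow> cmat \<Rightarrow> cmat \<Rightarrow> cmat" where
  "bracket n X Y = msub (mmult n X Y) (mmult n Y X)"

definition H :: "nat \<Rightarrow> cmat" where
  "H k = msub (E (k+1) (k+1)) (E 1 1)"

definition Psi_row1 :: "nat \<Rightarrow> nat \<Rightarrow> (nat + nat) mpoly" where
  "Psi_row1 n b = (if b = 1 then - (\<Sum>j=1..n. pv j * qv j)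
                   else if 2 \<le> b \<and> b \<le> n+1 then qv (b - 1) else 0)"

definition Psi :: "nat \<Rightarrow> nat \<Rightarrow> nat \<Rightarrow> (nat + nat) mpoly" where
  "Psi n a b = (if a = 1 then Psi_row1 n b
                else if 2 \<le> a \<and> a \<le> n+1 then pv (a - 1) * Psi_row1 n b else 0)"

definition tilde :: "nat \<Rightarrow> cmat \<Rightarrow> (nat + nat) mpoly" where
  "tilde n X = (\<Sum>a=1..n+1. \<Sum>b=1..n+1. Psi n a b * Const (X b a))"

text \<open>phi_1: the unique linear map on sl(n+1) with the prescribed values on the basis
  (extended by 0 outside sl(n+1), to make it a unique total function).\<close>
definition phi1 :: "nat \<Rightarrow> cmat \<Rightarrow> (nat + nat) mpoly" where
  "phi1 n = (THE \<phi>.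
      (\<forall>X\<in>sl n. \<forall>Y\<in>sl n. \<phi> (madd X Y) = \<phi> X + \<phi> Y)
    \<and> (\<forall>X\<in>sl n. \<forall>c. \<phi> (msmult c X) = Const c * \<phi> X)
    \<and> \<phi> (msub (E 1 1) (E 2 2)) = 1
    \<and> (\<forall>k. 2 \<le> k \<and> k \<le> n \<longrightarrow> \<phi> (msub (E k k) (E (k+1) (k+1))) = 0)
    \<and> (\<forall>k. 1 \<le> k \<and> k \<le> n \<longrightarrow> \<phi> (E 1 (k+1)) = pv k)
    \<and> (\<forall>i j. 2 \<le> i \<and> i \<le> n+1 \<and> 1 \<le> j \<and> j \<le> n+1 \<and> j \<noteq> i \<longrightarrow> \<phi> (E i j) = 0)
    \<and> (\<forall>X. X \<notin> sl n \<longrightarrow> \<phi> X = 0))"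

text \<open>Auxiliary ring: polynomials in (p,s), variable Inl k is p_k, Inr k is s_k.
  (W(u(p) q^alpha) phi)(p) = (i d_s)^alpha (u(p + s/2) phi(p+s)) at s = 0,
  then p renamed to z.  We apply it to monomials u = p^beta and extend linearly.\<close>

definition iDs :: "(nat \<Rightarrow>\<^sub>0 nat) \<Rightarrow> (nat + nat) mpoly \<Rightarrow> (nat + nat) mpoly" where
  "iDs \<alpha> G = foldr (\<lambda>k g. ((\<lambda>h. Const \<i> * pd (Inr k) h) ^^ Poly_Mapping.lookup \<alpha> k) g)
                   (sorted_list_of_set (Poly_Mapping.keys \<alpha>)) G"

definition Wmon :: "(nat \<Rightarrow>\<^sub>0 nat) \<Rightarrow> (nat \<Rightarrow>\<^sub>0 nat) \<Rightarrow> nat mpoly \<Rightarrow> nat mpoly" where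
  "Wmon \<beta> \<alpha> f =
     (let u_shift = (\<Prod>k\<in>Poly_Mapping.keys \<beta>. (Var (Inl k) + Const (1/2) * Var (Inr k)) ^ Poly_Mapping.lookup \<beta> k);
          f_shift = subst (\<lambda>k. Var (Inl k) + Var (Inr k)) f
      in subst (\<lambda>v. case v of Inl k \<Rightarrow> Var k | Inr k \<Rightarrow> 0) (iDs \<alpha> (u_shift * f_shift)))"

definition ppart :: "((nat + nat) \<Rightarrow>\<^sub>0 nat) \<Rightarrow> (nat \<Rightarrow>\<^sub>0 nat)" where
  "ppart m = Abs_poly_mapping (\<lambda>k. Poly_Mapping.lookup m (Inl k))"
definition qpart :: "((nat + nat) \<Rightarrow>\<^sub>0 nat) \<Rightarrow> (nat \<Rightarrow>\<^sub>0 nat)" where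
  "qpart m = Abs_poly_mapping (\<lambda>k. Poly_Mapping.lookup m (Inr k))"

definition W :: "(nat + nat) mpoly \<Rightarrow> nat mpoly \<Rightarrow> nat mpoly" where
  "W F f = (\<Sum>m\<in>Poly_Mapping.keys F. Const (Poly_Mapping.lookup F m) * Wmon (ppart m) (qpart m) f)"

definition rho :: "nat \<Rightarrow> complex \<Rightarrow> cmat \<Rightarrow> nat mpoly \<Rightarrow> nat mpoly" where
  "rho n a X = W (Const \<i> * tilde n X + Const (a/2) * phi1 n X)"

definition mA :: "nat \<Rightarrow> complex \<Rightarrow> complex" where
  "mA n a = - (a + of_nat n + 1) / 2"

end

theory Submission
  imports Defs
begin


abbreviation lk where "lk \<equiv> Poly_Mapping.lookup"
abbreviation sg where "sg \<equiv> Poly_Mapping.single"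
abbreviation ks where "ks \<equiv> Poly_Mapping.keys"

lemma Const_add: "Const (a + b) = Const a + Const b"
  by (simp add: Const_def Poly_Mapping.single_add)
lemma Const_mult: "Const (a * b) = (Const a * Const b :: 'v mpoly)"
  by (simp add: Const_def Poly_Mapping.mult_single)
lemma Const_0[simp]: "Const 0 = 0" by (simp add: Const_def)
lemma Const_1[simp]: "Const 1 = 1" by (simp add: Const_def)
lemma Const_uminus: "Const (- a) = - Const a" by (simp add: Const_def Poly_Mapping.single_uminus)
lemma Const_diff: "Const (a - b) = Const a - Const b" by (simp add: Const_def Poly_Mapping.single_diff)
lemma Const_sum: "Const (\<Sum>x\<in>S. f x) = (\<Sum>x\<in>S. Const (f x))"
  by (induction S rule: infinite_finite_induct) (auto simp: Const_add)
lemma Const_single: "Const c * sg m d = sg m (c * d)"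
  by (simp add: Const_def Poly_Mapping.mult_single)

lemma update_single_add:
  "Poly_Mapping.lookup f a = 0 \<Longrightarrow> Poly_Mapping.update a b f = sg a b + f"
  by (rule poly_mapping_eqI) (auto simp: Poly_Mapping.lookup_update lookup_add Poly_Mapping.lookup_single when_def)

lemma pm_induct:
  fixes f :: "'a \<Rightarrow>\<^sub>0 'b::monoid_add"
  assumes "P 0" "\<And>m c f. P f \<Longrightarrow> P (sg m c + f)"
  shows "P f"
proof (induction f rule: Poly_Mapping.update_induct)
  case const then show ?case using assms by simp
next
  case (update f a b)
  then show ?case using assms(2) by (simp add: update_single_add in_keys_iff)
qed

lemma pd_add: "pd v (F + G) = pd v F + pd v G"
  unfolding pd_def
  by (rule setsum_keys_plus_distrib) (auto simp: distrib_right Poly_Mapping.single_add)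

lemma pd_single: "pd v (sg m c) = sg (m - sg v 1) (c * of_nat (lk m v))"
  by (simp add: pd_def)

lemma pd_zero[simp]: "pd v 0 = 0" by (simp add: pd_def)

lemma pd_uminus: "pd v (- F) = - pd v F"
  using pd_add[of v F "-F"] by (simp add: add_eq_0_iff2)
lemma pd_diff: "pd v (F - G) = pd v F - pd v G"
  using pd_add[of v F "-G"] pd_uminus[of v G] by simp
lemma pd_sum: "pd v (\<Sum>x\<in>S. f x) = (\<Sum>x\<in>S. pd v (f x))"
  by (induction S rule: infinite_finite_induct) (auto simp: pd_add)

lemma lookup_sg: "lk (sg k v) k' = (if k = k' then v else 0)"
  by (simp add: Poly_Mapping.lookup_single when_def)

lemma pd_mult_single:
  "pd v (sg m c * sg m' c') = pd v (sg m c) * sg m' c' + sg m c * pd v (sg m' c')"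
proof -
  let ?e = "sg v (1::nat)"
  have 1: "lk m v > 0 \<Longrightarrow> m - ?e + m' = m + m' - ?e"
    by (rule poly_mapping_eqI) (auto simp: lookup_add lookup_minus lookup_sg)
  have 2: "lk m' v > 0 \<Longrightarrow> m + (m' - ?e) = m + m' - ?e"
    by (rule poly_mapping_eqI) (auto simp: lookup_add lookup_minus lookup_sg)
  have "pd v (sg m c * sg m' c') = sg (m + m' - ?e) (c * c' * of_nat (lk m v) + c * c' * of_nat (lk m' v))"
    by (simp add: Poly_Mapping.mult_single pd_single lookup_add algebra_simps)
  also have "\<dots> = sg (m + m' - ?e) (c * c' * of_nat (lk m v)) + sg (m + m' - ?e) (c * c' * of_nat (lk m' v))"
    by (simp add: Poly_Mapping.single_add)
  also have "sg (m + m' - ?e) (c * c' * of_nat (lk m v)) = pd v (sg m c) * sg m' c'"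
    using 1 by (cases "lk m v > 0") (auto simp: pd_single Poly_Mapping.mult_single algebra_simps)
  also have "sg (m + m' - ?e) (c * c' * of_nat (lk m' v)) = sg m c * pd v (sg m' c')"
    using 2 by (cases "lk m' v > 0") (auto simp: pd_single Poly_Mapping.mult_single algebra_simps)
  finally show ?thesis .
qed

lemma pd_mult_single_left: "pd v (sg m c * G) = pd v (sg m c) * G + sg m c * pd v G"
proof (induction G rule: pm_induct)
  case 1 then show ?case by simp
next
  case (2 m' c' f) then show ?case
    by (simp add: distrib_left distrib_right pd_add pd_mult_single)
qed

lemma pd_mult: "pd v (F * G) = pd v F * G + F * pd v G"
proof (induction F rule: pm_induct)
  case 1 then show ?case by simp
next
  case (2 m c f) then show ?case
    by (simp add: distrib_left distrib_right pd_add pd_mult_single_left)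
qed

lemma pd_Const[simp]: "pd v (Const c) = 0"
  by (simp add: Const_def pd_single)

lemma pd_Var: "pd v (Var w) = Const (if v = w then 1 else 0)"
  by (simp add: Var_def Const_def pd_single lookup_sg)

lemma pd_one[simp]: "pd v 1 = 0"
  using pd_Const[of v 1] by simp

lemma pd_Const_mult: "pd v (Const c * F) = Const c * pd v F"
  by (simp add: pd_mult)

lemma pd_comm: "pd v (pd w F) = pd w (pd v F)"
proof (induction F rule: pm_induct)
  case 1 then show ?case by simp
next
  case (2 m c f)
  have "pd v (pd w (sg m c)) = pd w (pd v (sg m c))"
  proof (cases "v = w")
    case False
    have "m - sg w 1 - sg v 1 = m - sg v 1 - sg w 1"
      by (rule poly_mapping_eqI) (auto simp: lookup_minus lookup_sg)
    with False show ?thesis by (simp add: pd_single lookup_minus lookup_sg algebra_simps)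
  qed simp
  with 2 show ?case by (simp add: pd_add)
qed



definition U :: "('v \<Rightarrow> 'w mpoly) \<Rightarrow> ('v \<Rightarrow>\<^sub>0 nat) \<Rightarrow> 'w mpoly" where
  "U \<sigma> m = (\<Prod>v\<in>ks m. \<sigma> v ^ lk m v)"

lemma U_superset: "finite S \<Longrightarrow> ks m \<subseteq> S \<Longrightarrow> U \<sigma> m = (\<Prod>v\<in>S. \<sigma> v ^ lk m v)"
  unfolding U_def by (rule prod.mono_neutral_left) (auto simp: in_keys_iff)

lemma U_add: "U \<sigma> (m + m') = U \<sigma> m * U \<sigma> m'"
proof -
  let ?S = "ks m \<union> ks m'"
  have "U \<sigma> (m + m') = (\<Prod>v\<in>?S. \<sigma> v ^ lk (m + m') v)"
    by (rule U_superset) (use Poly_Mapping.keys_add[of m m'] in auto)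
  also have "\<dots> = (\<Prod>v\<in>?S. \<sigma> v ^ lk m v) * (\<Prod>v\<in>?S. \<sigma> v ^ lk m' v)"
    by (simp add: lookup_add power_add prod.distrib)
  also have "\<dots> = U \<sigma> m * U \<sigma> m'"
    using U_superset[of ?S m \<sigma>] U_superset[of ?S m' \<sigma>] by simp
  finally show ?thesis .
qed

lemma U_zero[simp]: "U \<sigma> 0 = 1" by (simp add: U_def)
lemma U_sg: "U \<sigma> (sg v k) = \<sigma> v ^ k" by (simp add: U_def)

lemma subst_single: "subst \<sigma> (sg m c) = Const c * U \<sigma> m"
  by (simp add: subst_def U_def)

lemma subst_add: "subst \<sigma> (F + G) = subst \<sigma> F + subst \<sigma> G"
  unfolding subst_def
  by (rule setsum_keys_plus_distrib) (auto simp: distrib_right Const_add)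

lemma subst_zero[simp]: "subst \<sigma> 0 = 0" by (simp add: subst_def)
lemma subst_uminus: "subst \<sigma> (- F) = - subst \<sigma> F"
  using subst_add[of \<sigma> F "-F"] by (simp add: add_eq_0_iff2)
lemma subst_diff: "subst \<sigma> (F - G) = subst \<sigma> F - subst \<sigma> G"
  using subst_add[of \<sigma> F "-G"] subst_uminus[of \<sigma> G] by simp
lemma subst_sum: "subst \<sigma> (\<Sum>x\<in>S. f x) = (\<Sum>x\<in>S. subst \<sigma> (f x))"
  by (induction S rule: infinite_finite_induct) (auto simp: subst_add)

lemma subst_mult_single: "subst \<sigma> (sg m c * sg m' c') = subst \<sigma> (sg m c) * subst \<sigma> (sg m' c')"
  by (simp add: Poly_Mapping.mult_single subst_single U_add Const_mult algebra_simps)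

lemma subst_mult_single_left: "subst \<sigma> (sg m c * G) = subst \<sigma> (sg m c) * subst \<sigma> G"
proof (induction G rule: pm_induct)
  case 1 then show ?case by simp
next
  case (2 m' c' f) then show ?case
    by (simp add: distrib_left subst_add subst_mult_single)
qed

lemma subst_mult: "subst \<sigma> (F * G) = subst \<sigma> F * subst \<sigma> G"
proof (induction F rule: pm_induct)
  case 1 then show ?case by simp
next
  case (2 m c f) then show ?case
    by (simp add: distrib_right subst_add subst_mult_single_left)
qed

lemma subst_Const[simp]: "subst \<sigma> (Const c) = Const c"
  by (simp add: Const_def subst_single)
lemma subst_one[simp]: "subst \<sigma> 1 = 1"
  using subst_Const[of \<sigma> 1] by simp
lemma subst_Var[simp]: "subst \<sigma> (Var v) = \<sigma> v"
  by (simp add: Var_def subst_single U_sg)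
lemma subst_pow: "subst \<sigma> (F ^ k) = subst \<sigma> F ^ k"
  by (induction k) (auto simp: subst_mult)
lemma subst_prod: "subst \<sigma> (\<Prod>x\<in>S. f x) = (\<Prod>x\<in>S. subst \<sigma> (f x))"
  by (induction S rule: infinite_finite_induct) (auto simp: subst_mult)

lemma subst_U: "subst \<tau> (U \<sigma> m) = U (\<lambda>v. subst \<tau> (\<sigma> v)) m"
  by (simp add: U_def subst_prod subst_pow)

lemma subst_subst: "subst \<tau> (subst \<sigma> F) = subst (\<lambda>v. subst \<tau> (\<sigma> v)) F"
proof (induction F rule: pm_induct)
  case 1 then show ?case by simp
next
  case (2 m c f) then show ?case
    by (simp add: subst_add subst_single subst_mult subst_U)
qed

lemma nat_pm_induct:
  fixes m :: "'v \<Rightarrow>\<^sub>0 nat"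
  assumes "P 0" "\<And>m v. P m \<Longrightarrow> P (m + sg v 1)"
  shows "P m"
proof (induction m rule: pm_induct)
  case 1 then show ?case using assms by simp
next
  case (2 v k f)
  show ?case
  proof (induction k)
    case 0 then show ?case using 2 by simp
  next
    case (Suc k)
    have "sg v (Suc k) + f = (sg v k + f) + sg v 1"
      by (simp add: Poly_Mapping.single_add[symmetric] add_ac)
    with Suc assms(2) show ?case by metis
  qed
qed

lemma Var_pow: "Var v ^ k = (sg (sg v k) 1 :: 'v mpoly)"
proof (induction k)
  case 0 then show ?case by simp
next
  case (Suc k) then show ?case
    by (simp add: Var_def Poly_Mapping.mult_single Poly_Mapping.single_add[symmetric] mult.commute)
qed

lemma U_Var: "U Var m = sg m 1"
proof (induction m rule: nat_pm_induct)
  case 1 then show ?case by simp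
next
  case (2 m v) then show ?case
    by (simp add: U_add U_sg Var_def Poly_Mapping.mult_single)
qed

lemma subst_Var_id: "subst Var F = F"
proof (induction F rule: pm_induct)
  case 1 then show ?case by simp
next
  case (2 m c f) then show ?case
    by (simp add: subst_add subst_single U_Var Const_single)
qed

lemma pd_U:
  assumes "\<And>v. pd w (\<sigma> v) = Const (if v = j then c else 0)"
  shows "pd w (U \<sigma> m) = Const (c * of_nat (lk m j)) * U \<sigma> (m - sg j 1)"
proof (induction m rule: nat_pm_induct)
  case 1 then show ?case by (simp add: U_def)
next
  case (2 m v)
  have "pd w (U \<sigma> (m + sg v 1)) = pd w (U \<sigma> m) * \<sigma> v + U \<sigma> m * pd w (\<sigma> v)"
    by (simp add: U_add U_sg pd_mult)
  also have "\<dots> = Const (c * of_nat (lk m j)) * U \<sigma> (m - sg j 1) * \<sigma> v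
       + U \<sigma> m * Const (if v = j then c else 0)"
    using 2 assms by simp
  also have "\<dots> = Const (c * of_nat (lk (m + sg v 1) j)) * U \<sigma> (m + sg v 1 - sg j 1)"
  proof (cases "v = j")
    case True
    show ?thesis
    proof (cases "lk m j > 0")
      case True
      have e: "m - sg j 1 + sg j 1 = m"
        by (rule poly_mapping_eqI) (use True in \<open>auto simp: lookup_add lookup_minus lookup_sg\<close>)
      have "U \<sigma> (m - sg j 1) * \<sigma> j = U \<sigma> (m - sg j 1 + sg j 1)"
        by (simp add: U_add U_sg)
      also have "\<dots> = U \<sigma> m" using e by simp
      finally have "U \<sigma> (m - sg j 1) * \<sigma> j = U \<sigma> m" .
      note h = this
      have eq: "m + sg v 1 - sg j 1 = m" using \<open>v = j\<close> by simp
      have lk: "lk (m + sg v 1) j = lk m j + 1" using \<open>v = j\<close> by (simp add: lookup_add lookup_sg)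
      have cc: "Const (c * of_nat (lk m j + 1)) = Const (c * of_nat (lk m j)) + Const c"
        by (simp add: Const_add[symmetric] algebra_simps)
      have h2: "Const (c * of_nat (lk m j)) * U \<sigma> (m - sg j 1) * \<sigma> j = Const (c * of_nat (lk m j)) * U \<sigma> m"
        using h by (simp add: mult.assoc)
      show ?thesis unfolding eq lk cc using \<open>v = j\<close> h2 by (simp add: algebra_simps)
    next
      case False
      then show ?thesis using \<open>v = j\<close>
        by (simp add: lookup_add lookup_sg)
    qed
  next
    case False
    show ?thesis
    proof (cases "lk m j > 0")
      case True
      have e: "m - sg j 1 + sg v 1 = m + sg v 1 - sg j 1"
        by (rule poly_mapping_eqI) (use True False in \<open>auto simp: lookup_add lookup_minus lookup_sg\<close>)
      have "U \<sigma> (m - sg j 1) * \<sigma> v = U \<sigma> (m - sg j 1 + sg v 1)"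
        by (simp add: U_add U_sg)
      also have "\<dots> = U \<sigma> (m + sg v 1 - sg j 1)" using e by simp
      finally have "U \<sigma> (m - sg j 1) * \<sigma> v = U \<sigma> (m + sg v 1 - sg j 1)" .
      then show ?thesis using False
        by (simp add: lookup_add lookup_sg mult.assoc)
    next
      case False
      then show ?thesis using \<open>v \<noteq> j\<close>
        by (simp add: lookup_add lookup_sg)
    qed
  qed
  finally show ?case .
qed

lemma pd_subst:
  assumes "\<And>v. pd w (\<sigma> v) = Const (if v = j then 1 else 0)"
  shows "pd w (subst \<sigma> F) = subst \<sigma> (pd j F)"
proof (induction F rule: pm_induct)
  case 1 then show ?case by simp
next
  case (2 m c f)
  have "pd w (subst \<sigma> (sg m c)) = subst \<sigma> (pd j (sg m c))"
    using pd_U[of w \<sigma> j 1 m, OF assms]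
    by (simp add: subst_single pd_Const_mult pd_single Const_mult mult.assoc)
  with 2 show ?case by (simp add: subst_add pd_add)
qed



definition uu :: "nat \<Rightarrow> (nat + nat) mpoly" where
  "uu k = Var (Inl k) + Const (1/2) * Var (Inr k)"
definition sh :: "nat \<Rightarrow> (nat + nat) mpoly" where
  "sh k = Var (Inl k) + Var (Inr k)"
definition r0 :: "nat + nat \<Rightarrow> nat mpoly" where
  "r0 v = (case v of Inl k \<Rightarrow> Var k | Inr k \<Rightarrow> 0)"

lemma Wmon_alt: "Wmon \<beta> \<alpha> f = subst r0 (iDs \<alpha> (U uu \<beta> * subst sh f))"
  unfolding Wmon_def U_def uu_def sh_def r0_def Let_def by simp

lemma iDs_zero: "iDs 0 G = G" by (simp add: iDs_def)
lemma iDs_single: "iDs (sg j 1) G = Const \<i> * pd (Inr j) G"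
  by (simp add: iDs_def)
lemmas iDs_single' = iDs_single[unfolded One_nat_def]

lemma r0_uu: "subst r0 (uu v) = Var v"
  by (simp add: uu_def r0_def subst_add subst_mult)
lemma r0_sh: "subst r0 (sh v) = Var v"
  by (simp add: sh_def r0_def subst_add)

lemma r0_U_uu: "subst r0 (U uu m) = sg m 1"
  by (simp add: subst_U r0_uu U_Var)
lemma r0_sh_id: "subst r0 (subst sh f) = f"
  by (simp add: subst_subst r0_sh subst_Var_id)

lemma Wmon0: "Wmon \<beta> 0 f = sg \<beta> 1 * f"
  by (simp add: Wmon_alt iDs_zero subst_mult r0_U_uu r0_sh_id)

lemma pd_uu: "pd (Inr j) (uu v) = Const (if v = j then 1/2 else 0)"
  by (simp add: uu_def pd_add pd_Const_mult pd_Var Const_mult[symmetric])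
lemma pd_sh: "pd (Inr j) (sh v) = Const (if v = j then 1 else 0)"
  by (simp add: sh_def pd_add pd_Var)

lemma Wmon1: "Wmon \<beta> (sg j 1) f =
   Const \<i> * (Const (of_nat (lk \<beta> j) / 2) * sg (\<beta> - sg j 1) 1 * f + sg \<beta> 1 * pd j f)"
proof -
  have a: "pd (Inr j) (U uu \<beta>) = Const (1/2 * of_nat (lk \<beta> j)) * U uu (\<beta> - sg j 1)"
    by (rule pd_U) (simp add: pd_uu)
  have b: "pd (Inr j) (subst sh f) = subst sh (pd j f)"
    by (rule pd_subst) (simp add: pd_sh)
  show ?thesis
    by (simp add: Wmon_alt iDs_single iDs_single' pd_mult a b subst_mult subst_add r0_U_uu r0_sh_id)
qed
lemmas Wmon1' = Wmon1[unfolded One_nat_def]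

definition ppart' :: "((nat + nat) \<Rightarrow>\<^sub>0 nat) \<Rightarrow> nat \<Rightarrow> nat" where
  "ppart' m k = lk m (Inl k)"

lemma fin_Inl: "finite {k. lk m (Inl k) \<noteq> 0}"
proof -
  have "{k. lk m (Inl k) \<noteq> 0} = Inl -` ks m" by (auto simp: in_keys_iff)
  then show ?thesis by (simp add: finite_vimageI)
qed
lemma fin_Inr: "finite {k. lk m (Inr k) \<noteq> 0}"
proof -
  have "{k. lk m (Inr k) \<noteq> 0} = Inr -` ks m" by (auto simp: in_keys_iff)
  then show ?thesis by (simp add: finite_vimageI)
qed

lemma lookup_ppart: "lk (ppart m) k = lk m (Inl k)"
  using lookup_Abs_poly_mapping[OF fin_Inl[of m]] by (simp add: ppart_def)
lemma lookup_qpart: "lk (qpart m) k = lk m (Inr k)"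
  using lookup_Abs_poly_mapping[OF fin_Inr[of m]] by (simp add: qpart_def)

lemma ppart_add: "ppart (m + m') = ppart m + ppart m'"
  by (rule poly_mapping_eqI) (simp add: lookup_ppart lookup_add)
lemma qpart_add: "qpart (m + m') = qpart m + qpart m'"
  by (rule poly_mapping_eqI) (simp add: lookup_qpart lookup_add)
lemma ppart_zero[simp]: "ppart 0 = 0"
  by (rule poly_mapping_eqI) (simp add: lookup_ppart)
lemma qpart_zero[simp]: "qpart 0 = 0"
  by (rule poly_mapping_eqI) (simp add: lookup_qpart)
lemma ppart_Inl[simp]: "ppart (sg (Inl k) t) = sg k t"
  by (rule poly_mapping_eqI) (simp add: lookup_ppart lookup_sg)
lemma ppart_Inr[simp]: "ppart (sg (Inr k) t) = 0"
  by (rule poly_mapping_eqI) (simp add: lookup_ppart lookup_sg)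
lemma qpart_Inl[simp]: "qpart (sg (Inl k) t) = 0"
  by (rule poly_mapping_eqI) (simp add: lookup_qpart lookup_sg)
lemma qpart_Inr[simp]: "qpart (sg (Inr k) t) = sg k t"
  by (rule poly_mapping_eqI) (simp add: lookup_qpart lookup_sg)

lemma W_add: "W (F + G) f = W F f + W G f"
  unfolding W_def
  by (rule setsum_keys_plus_distrib) (auto simp: distrib_right Const_add)
lemma W_zero[simp]: "W 0 f = 0" by (simp add: W_def)
lemma W_single: "W (sg m c) f = Const c * Wmon (ppart m) (qpart m) f"
  by (simp add: W_def)
lemma W_uminus: "W (- F) f = - W F f"
  using W_add[of F "-F" f] by (simp add: add_eq_0_iff2)
lemma W_diff: "W (F - G) f = W F f - W G f"
  using W_add[of F "-G" f] W_uminus[of G f] by simp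
lemma W_sum: "W (\<Sum>x\<in>S. g x) f = (\<Sum>x\<in>S. W (g x) f)"
  by (induction S rule: infinite_finite_induct) (auto simp: W_add)
lemma W_Const_mult: "W (Const c * F) f = Const c * W F f"
proof (induction F rule: pm_induct)
  case 1 then show ?case by simp
next
  case (2 m d g) then show ?case
    by (simp add: distrib_left W_add Const_single W_single Const_mult mult.assoc)
qed

definition pm :: "nat \<Rightarrow> nat \<Rightarrow>\<^sub>0 nat" where
  "pm a = (if a = 1 then 0 else sg (a - 1) 1)"
definition wm :: "nat \<Rightarrow> (nat + nat) \<Rightarrow>\<^sub>0 nat" where
  "wm a = (if a = 1 then 0 else sg (Inl (a - 1)) 1)"
definition wp :: "nat \<Rightarrow> (nat + nat) mpoly" where
  "wp a = (if a = 1 then 1 else pv (a - 1))"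
definition wz :: "nat \<Rightarrow> nat mpoly" where
  "wz a = (if a = 1 then 1 else Var (a - 1))"

lemma wp_sg: "wp a = sg (wm a) 1" by (simp add: wp_def wm_def Var_def)
lemma wz_sg: "wz a = sg (pm a) 1" by (simp add: wz_def pm_def Var_def)
lemma ppart_wm: "ppart (wm a) = pm a" by (simp add: wm_def pm_def)
lemma qpart_wm: "qpart (wm a) = 0" by (simp add: wm_def)
lemma lk_pm: "1 \<le> a \<Longrightarrow> 1 \<le> j \<Longrightarrow> lk (pm a) j = (if a = j + 1 then 1 else 0)"
  by (auto simp: pm_def lookup_sg)

lemma W_wp: "W (wp a) f = wz a * f"
  by (simp add: wp_sg W_single ppart_wm qpart_wm Wmon0 wz_sg)

lemma W_wp_q:
  assumes "1 \<le> a" "1 \<le> j"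
  shows "W (wp a * qv j) f = Const \<i> * (Const (if a = j + 1 then 1/2 else 0) * f + wz a * pd j f)"
proof -
  have e: "wp a * qv j = sg (wm a + sg (Inr j) 1) 1"
    by (simp add: wp_sg Var_def Poly_Mapping.mult_single)
  have z: "pm (Suc j) - sg j (Suc 0) = 0"
    using assms by (simp add: pm_def)
  show ?thesis
    using assms by (auto simp: e W_single ppart_add qpart_add ppart_wm qpart_wm Wmon1 Wmon1' lk_pm wz_sg z z[unfolded One_nat_def])
qed

lemma W_wp_pq:
  assumes "1 \<le> a" "1 \<le> j"
  shows "W (wp a * pv j * qv j) f = Const \<i> * (Const (if a = j + 1 then 1 else 1/2) * wz a * f + wz a * Var j * pd j f)"
proof -
  have e: "wp a * pv j * qv j = sg (wm a + sg (Inl j) 1 + sg (Inr j) 1) 1"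
    by (simp add: wp_sg Var_def Poly_Mapping.mult_single)
  have z: "pm a + sg j 1 - sg j 1 = pm a"
    by simp
  have v: "sg (pm a) 1 * Var j = sg (pm a + sg j (Suc 0)) 1"
    by (simp add: Var_def Poly_Mapping.mult_single)
  have l: "of_nat (lk (pm a + sg j 1) j) / 2 = (if a = j + 1 then 1 else 1/2 :: complex)"
    using assms by (simp add: lookup_add lk_pm)
  show ?thesis
    by (simp add: e W_single ppart_add qpart_add ppart_wm qpart_wm Wmon1 Wmon1' l z v wz_sg l[unfolded One_nat_def] z[unfolded One_nat_def] v[unfolded One_nat_def])
qed



declare sum.cl_ivl_Suc[simp del]

lemma sum_split1: "(\<Sum>b=1..(n::nat)+1. g b) = g 1 + (\<Sum>j=1..n. g (j+1))"
proof -
  have "(\<Sum>b=1..n+1. g b) = g 1 + (\<Sum>b=Suc 1..Suc n. g b)"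
    by (subst sum.atLeast_Suc_atMost) auto
  also have "(\<Sum>b=Suc 1..Suc n. g b) = (\<Sum>j=1..n. g (Suc j))"
    by (rule sum.shift_bounds_cl_Suc_ivl)
  finally show ?thesis by simp
qed

lemma sum_delta_gen: "finite S \<Longrightarrow> (\<Sum>b\<in>S. (if b = t then g b else 0)) = (if t \<in> S then g t else 0)"
  by (simp add: sum.delta)

definition msum :: "'i set \<Rightarrow> ('i \<Rightarrow> cmat) \<Rightarrow> cmat" where
  "msum S M = (\<lambda>i j. \<Sum>t\<in>S. M t i j)"

lemma sl_madd: "X \<in> sl n \<Longrightarrow> Y \<in> sl n \<Longrightarrow> madd X Y \<in> sl n"
  by (simp add: sl_def madd_def sum.distrib)
lemma sl_msmult: "X \<in> sl n \<Longrightarrow> msmult c X \<in> sl n"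
  by (simp add: sl_def msmult_def sum_distrib_left[symmetric])
lemma sl_msub: "X \<in> sl n \<Longrightarrow> Y \<in> sl n \<Longrightarrow> msub X Y \<in> sl n"
  by (simp add: sl_def msub_def sum_subtractf)
lemma sl_zero: "(\<lambda>i j. 0) \<in> sl n"
  by (simp add: sl_def)
lemma sl_E: "i \<in> {1..n+1} \<Longrightarrow> j \<in> {1..n+1} \<Longrightarrow> i \<noteq> j \<Longrightarrow> E i j \<in> sl n"
  unfolding sl_def E_def by (auto intro!: sum.neutral)

lemma mult_delta: "x * (if P then 1 else 0) = (if P then x else (0::'a::semiring_1))"
  by simp
lemma sl_Ediff: "i \<in> {1..n+1} \<Longrightarrow> j \<in> {1..n+1} \<Longrightarrow> msub (E i i) (E j j) \<in> sl n"
  by (auto simp: sl_def E_def msub_def sum.distrib sum_subtractf)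
lemma sl_msum: "finite S \<Longrightarrow> (\<And>t. t \<in> S \<Longrightarrow> M t \<in> sl n) \<Longrightarrow> msum S M \<in> sl n"
proof (induction S rule: finite_induct)
  case empty then show ?case by (simp add: msum_def sl_zero)
next
  case (insert t S)
  have "msum (insert t S) M = madd (M t) (msum S M)"
    using insert by (simp add: msum_def madd_def fun_eq_iff)
  then show ?case using insert sl_madd by simp
qed

lemma phi_msum:
  assumes add: "\<forall>X\<in>sl n. \<forall>Y\<in>sl n. \<phi> (madd X Y) = \<phi> X + \<phi> Y"
    and hom: "\<forall>X\<in>sl n. \<forall>c. \<phi> (msmult c X) = Const c * \<phi> X"
  shows "finite S \<Longrightarrow> (\<And>t. t \<in> S \<Longrightarrow> M t \<in> sl n) \<Longrightarrow> \<phi> (msum S M) = (\<Sum>t\<in>S. \<phi> (M t))"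
proof (induction S rule: finite_induct)
  case empty
  have "\<phi> (msmult 0 (\<lambda>i j. 0)) = 0" using hom sl_zero by simp
  moreover have "msmult 0 (\<lambda>i j. 0) = (\<lambda>i j. 0)" by (simp add: msmult_def)
  ultimately show ?case by (simp add: msum_def)
next
  case (insert t S)
  have "msum (insert t S) M = madd (M t) (msum S M)"
    using insert by (simp add: msum_def madd_def fun_eq_iff)
  then show ?case using insert add sl_msum[of S M n] by simp
qed

definition phi0 :: "nat \<Rightarrow> cmat \<Rightarrow> (nat + nat) mpoly" where
  "phi0 n X = (if X \<in> sl n then (\<Sum>b=1..n+1. Const (X 1 b) * wp b) else 0)"

definition Pphi where
  "Pphi n \<phi> \<longleftrightarrow>
      (\<forall>X\<in>sl n. \<forall>Y\<in>sl n. \<phi> (madd X Y) = \<phi> X + \<phi> Y)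
    \<and> (\<forall>X\<in>sl n. \<forall>c. \<phi> (msmult c X) = Const c * \<phi> X)
    \<and> \<phi> (msub (E 1 1) (E 2 2)) = 1
    \<and> (\<forall>k. 2 \<le> k \<and> k \<le> n \<longrightarrow> \<phi> (msub (E k k) (E (k+1) (k+1))) = 0)
    \<and> (\<forall>k. 1 \<le> k \<and> k \<le> n \<longrightarrow> \<phi> (E 1 (k+1)) = pv k)
    \<and> (\<forall>i j. 2 \<le> i \<and> i \<le> n+1 \<and> 1 \<le> j \<and> j \<le> n+1 \<and> j \<noteq> i \<longrightarrow> \<phi> (E i j) = 0)
    \<and> (\<forall>X. X \<notin> sl n \<longrightarrow> \<phi> X = 0)"

lemma phi1_Pphi: "phi1 n = (THE \<phi>. Pphi n \<phi>)"
  unfolding phi1_def Pphi_def ..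

lemma row1_sum_delta:
  assumes "t \<in> {1..n+1}"
  shows "(\<Sum>b=1..n+1. Const (if b = t then 1 else 0) * wp b) = wp t"
proof -
  have "(\<Sum>b=1..n+1. Const (if b = t then 1 else 0) * wp b) = (\<Sum>b=1..n+1. if b = t then wp b else 0)"
    by (rule sum.cong) auto
  then show ?thesis using assms by (simp add: sum.delta)
qed

lemma phi0_P:
  assumes "1 \<le> n"
  shows "Pphi n (phi0 n)"
  unfolding Pphi_def
proof (intro conjI allI ballI impI)
  fix X Y assume X: "X \<in> sl n" and Y: "Y \<in> sl n"
  have m: "madd X Y \<in> sl n" using X Y by (rule sl_madd)
  show "phi0 n (madd X Y) = phi0 n X + phi0 n Y"
    using m X Y unfolding phi0_def by (simp add: madd_def Const_add distrib_right sum.distrib)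
next
  fix X c assume X: "X \<in> sl n"
  have m: "msmult c X \<in> sl n" using X by (rule sl_msmult)
  show "phi0 n (msmult c X) = Const c * phi0 n X"
    using m X unfolding phi0_def by (simp add: msmult_def Const_mult sum_distrib_left mult.assoc)
next
  have "msub (E 1 1) (E 2 2) \<in> sl n" using assms by (intro sl_Ediff) auto
  moreover have "(\<lambda>b. msub (E 1 1) (E 2 2) 1 b) = (\<lambda>b. if b = 1 then 1 else 0)"
    by (auto simp: msub_def E_def fun_eq_iff)
  ultimately show "phi0 n (msub (E 1 1) (E 2 2)) = 1"
    using row1_sum_delta[of 1 n] by (simp add: phi0_def wp_def)
next
  fix k assume k: "2 \<le> k \<and> k \<le> n"
  then show "phi0 n (msub (E k k) (E (k+1) (k+1))) = 0"
    by (simp add: phi0_def msub_def E_def)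
next
  fix k assume k: "1 \<le> k \<and> k \<le> n"
  then have "E 1 (k+1) \<in> sl n" by (intro sl_E) auto
  moreover have "(\<lambda>b. E 1 (k+1) 1 b) = (\<lambda>b. if b = k+1 then 1 else 0)"
    by (auto simp: E_def fun_eq_iff)
  ultimately show "phi0 n (E 1 (k+1)) = pv k"
    using row1_sum_delta[of "k+1" n] k by (simp add: phi0_def wp_def)
next
  fix i j assume "2 \<le> i \<and> i \<le> n+1 \<and> 1 \<le> j \<and> j \<le> n+1 \<and> j \<noteq> i"
  then show "phi0 n (E i j) = 0"
    by (simp add: phi0_def E_def)
next
  fix X assume "X \<notin> sl n"
  then show "phi0 n X = 0" by (simp add: phi0_def)
qed

lemma sl_decomp:
  assumes "1 \<le> n" "X \<in> sl n"
  defines "R \<equiv> {1..n+1}"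
  defines "c \<equiv> (\<lambda>k. \<Sum>t=1..k. X t t)"
  shows "X = madd (msum R (\<lambda>i. msum (R - {i}) (\<lambda>j. msmult (X i j) (E i j))))
                  (msum {1..n} (\<lambda>k. msmult (c k) (msub (E k k) (E (Suc k) (Suc k)))))"
proof -
  have Xo: "\<And>i j. i \<notin> R \<or> j \<notin> R \<Longrightarrow> X i j = 0" using assms(2) by (auto simp: sl_def R_def)
  have tr: "(\<Sum>t=1..n+1. X t t) = 0" using assms(2) by (simp add: sl_def)
  have A: "msum R (\<lambda>i. msum (R - {i}) (\<lambda>j. msmult (X i j) (E i j))) i j
        = (if i \<in> R \<and> j \<in> R \<and> i \<noteq> j then X i j else 0)" for i j
  proof -
    have "msum R (\<lambda>i. msum (R - {i}) (\<lambda>j. msmult (X i j) (E i j))) i j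
       = (\<Sum>i'\<in>R. \<Sum>j'\<in>R - {i'}. if i = i' \<and> j = j' then X i' j' else 0)"
      unfolding msum_def msmult_def E_def by (simp add: mult_delta)
    also have "\<dots> = (\<Sum>i'\<in>R. if i' = i then (\<Sum>j'\<in>R - {i}. if j = j' then X i j' else 0) else 0)"
      by (rule sum.cong[OF refl]) auto
    also have "\<dots> = (if i \<in> R \<and> j \<in> R \<and> i \<noteq> j then X i j else 0)"
      by (simp add: sum.delta sum.delta' R_def)
    finally show ?thesis .
  qed
  have Dg: "msum {1..n} (\<lambda>k. msmult (c k) (msub (E k k) (E (Suc k) (Suc k)))) i j
        = (if i = j then (if i \<in> {1..n} then c i else 0) - (if i - 1 \<in> {1..n} \<and> 1 \<le> i then c (i - 1) else 0) else 0)" for i j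
  proof (cases "i = j")
    case True
    have "msum {1..n} (\<lambda>k. msmult (c k) (msub (E k k) (E (Suc k) (Suc k)))) i j
       = (\<Sum>k=1..n. (if k = i then c k else 0) - (if k = i - 1 \<and> 1 \<le> i then c k else 0))"
    proof -
      have pw: "\<And>k. msmult (c k) (msub (E k k) (E (Suc k) (Suc k))) i i = (if k = i then c k else 0) - (if k = i - 1 \<and> 1 \<le> i then c k else 0)"
        by (auto simp: msmult_def msub_def E_def)
      show ?thesis unfolding msum_def using True pw by simp
    qed
    also have "\<dots> = (if i \<in> {1..n} then c i else 0) - (if i - 1 \<in> {1..n} \<and> 1 \<le> i then c (i - 1) else 0)"
    proof -
      have s1: "(\<Sum>k=1..n. (if k = i then c k else 0)) = (if i \<in> {1..n} then c i else 0)"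
        by (rule sum.delta[OF finite_atLeastAtMost])
      have s2: "(\<Sum>k=1..n. (if k = i - 1 \<and> 1 \<le> i then c k else 0)) = (if i - 1 \<in> {1..n} \<and> 1 \<le> i then c (i - 1) else 0)"
        using sum.delta[of "{1..n}" "i - 1" c] by (cases "1 \<le> i") auto
      show ?thesis by (simp only: sum_subtractf s1 s2)
    qed
    finally show ?thesis using True by simp
  next
    case False then show ?thesis
      unfolding msum_def msmult_def msub_def E_def by (auto intro!: sum.neutral)
  qed
  have c1: "c 1 = X 1 1" by (simp add: c_def)
  have cS: "c (Suc k) = c k + X (Suc k) (Suc k)" for k by (simp add: c_def sum.cl_ivl_Suc)
  show ?thesis
  proof (rule ext, rule ext)
    fix i j
    show "X i j = madd (msum R (\<lambda>i. msum (R - {i}) (\<lambda>j. msmult (X i j) (E i j))))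
                  (msum {1..n} (\<lambda>k. msmult (c k) (msub (E k k) (E (Suc k) (Suc k))))) i j"
    proof (cases "i = j")
      case False
      show ?thesis
      proof (cases "i \<in> R \<and> j \<in> R")
        case True then show ?thesis using False by (simp add: madd_def A Dg Dg[unfolded One_nat_def])
      next
        case F2: False
        then have "X i j = 0" using Xo by blast
        then show ?thesis using False F2 by (simp add: madd_def A Dg Dg[unfolded One_nat_def])
      qed
    next
      case True
      show ?thesis
      proof (cases "i \<in> R")
        case False
        then have x0: "X i j = 0" using Xo by blast
        have a0: "msum R (\<lambda>i. msum (R - {i}) (\<lambda>j. msmult (X i j) (E i j))) i j = 0"
          using A[of i j] False by simp
        have nn1: "\<not> (i \<in> {1..n})" and nn2: "\<not> (i - 1 \<in> {1..n} \<and> 1 \<le> i)"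
          using False by (auto simp: R_def)
        have d0: "msum {1..n} (\<lambda>k. msmult (c k) (msub (E k k) (E (Suc k) (Suc k)))) i j = 0"
          using Dg[of i i] nn1 nn2 True by (simp only: if_False if_True) simp
        show ?thesis using x0 a0 d0 by (simp add: madd_def)
      next
        case iR: True
        have "i = 1 \<or> (2 \<le> i \<and> i \<le> n) \<or> i = n + 1" using iR unfolding R_def atLeastAtMost_iff by presburger
        then consider "i = 1" | "2 \<le> i \<and> i \<le> n" | "i = n + 1" by blast
        then show ?thesis
        proof cases
          case 1 then show ?thesis using True assms(1) by (simp add: madd_def A Dg Dg[unfolded One_nat_def] c1 c1[unfolded One_nat_def])
        next
          case 2
          obtain k where k: "i = Suc k" using 2 by (cases i) auto
          then have "1 \<le> k" using 2 by simp
          have ci: "c i - c (i - 1) = X i i" using k cS[of k] by simp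
          have "1 \<le> i - 1 \<and> i - 1 \<le> n" using 2 by linarith
          then show ?thesis using True 2 ci by (simp add: madd_def A Dg Dg[unfolded One_nat_def])
        next
          case 3
          have "c n + X (n+1) (n+1) = 0" using tr by (simp add: c_def sum.cl_ivl_Suc)
          then have h: "X (n+1) (n+1) = - c n" by (metis add_eq_0_iff2 minus_minus add.commute)
          have e: "j = n + 1" "i = n + 1" using True 3 by simp_all
          show ?thesis unfolding e using h assms(1) by (simp add: madd_def A Dg Dg[unfolded One_nat_def])
        qed
      qed
    qed
  qed
qed

lemma Pphi_unique:
  assumes n: "1 \<le> n" and P: "Pphi n \<phi>"
  shows "\<phi> = phi0 n"
proof
  fix X
  show "\<phi> X = phi0 n X"
  proof (cases "X \<in> sl n")
    case False then show ?thesis using P by (simp add: Pphi_def phi0_def)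
  next
    case X: True
    define R where "R = {1..n+1::nat}"
    define c where "c = (\<lambda>k. \<Sum>t=1..k. X t t)"
    have add: "\<forall>X\<in>sl n. \<forall>Y\<in>sl n. \<phi> (madd X Y) = \<phi> X + \<phi> Y"
      and hom: "\<forall>X\<in>sl n. \<forall>c. \<phi> (msmult c X) = Const c * \<phi> X"
      and v1: "\<phi> (msub (E 1 1) (E 2 2)) = 1"
      and v2: "\<And>k. 2 \<le> k \<and> k \<le> n \<Longrightarrow> \<phi> (msub (E k k) (E (k+1) (k+1))) = 0"
      and v3: "\<And>k. 1 \<le> k \<and> k \<le> n \<Longrightarrow> \<phi> (E 1 (k+1)) = pv k"
      and v4: "\<And>i j. 2 \<le> i \<and> i \<le> n+1 \<and> 1 \<le> j \<and> j \<le> n+1 \<and> j \<noteq> i \<Longrightarrow> \<phi> (E i j) = 0"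
      using P unfolding Pphi_def by blast+
    note pm = phi_msum[OF add hom]
    let ?A = "msum R (\<lambda>i. msum (R - {i}) (\<lambda>j. msmult (X i j) (E i j)))"
    let ?D = "msum {1..n} (\<lambda>k. msmult (c k) (msub (E k k) (E (Suc k) (Suc k))))"
    have Esl: "\<And>i j. i \<in> R \<Longrightarrow> j \<in> R - {i} \<Longrightarrow> msmult (X i j) (E i j) \<in> sl n"
      by (intro sl_msmult sl_E) (auto simp: R_def)
    have Dsl: "\<And>k. k \<in> {1..n} \<Longrightarrow> msmult (c k) (msub (E k k) (E (Suc k) (Suc k))) \<in> sl n"
      by (intro sl_msmult sl_Ediff) auto
    have Asl: "?A \<in> sl n" by (intro sl_msum) (auto simp: R_def intro: Esl)
    have Dgsl: "?D \<in> sl n" by (intro sl_msum Dsl) auto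
    have dec: "X = madd ?A ?D" unfolding R_def c_def by (rule sl_decomp[OF n X])
    have "\<phi> ?A = (\<Sum>i\<in>R. \<phi> (msum (R - {i}) (\<lambda>j. msmult (X i j) (E i j))))"
      by (rule pm) (auto simp: R_def intro!: sl_msum Esl)
    also have "\<dots> = (\<Sum>i\<in>R. \<Sum>j\<in>R - {i}. \<phi> (msmult (X i j) (E i j)))"
      by (rule sum.cong[OF refl], rule pm) (auto simp: R_def intro: Esl)
    also have "\<dots> = (\<Sum>i\<in>R. if i = 1 then (\<Sum>j\<in>R - {1}. Const (X 1 j) * pv (j - 1)) else 0)"
    proof (rule sum.cong[OF refl])
      fix i assume i: "i \<in> R"
      show "(\<Sum>j\<in>R - {i}. \<phi> (msmult (X i j) (E i j))) = (if i = 1 then (\<Sum>j\<in>R - {1}. Const (X 1 j) * pv (j - 1)) else 0)"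
      proof (cases "i = 1")
        case True
        have eq: "\<phi> (msmult (X 1 j) (E 1 j)) = Const (X 1 j) * pv (j - 1)" if j: "j \<in> R - {1}" for j
        proof -
          from j have "\<phi> (E 1 ((j - 1) + 1)) = pv (j - 1)" by (intro v3) (auto simp: R_def)
          moreover have "E 1 j \<in> sl n" using j by (intro sl_E) (auto simp: R_def)
          ultimately show "\<phi> (msmult (X 1 j) (E 1 j)) = Const (X 1 j) * pv (j - 1)"
            using hom j by (simp add: R_def)
        qed
        show ?thesis using True eq by (auto intro: sum.cong)
      next
        case False
        have "\<phi> (msmult (X i j) (E i j)) = 0" if j: "j \<in> R - {i}" for j
        proof -
          have "E i j \<in> sl n" using i j by (intro sl_E) (auto simp: R_def)
          moreover have "\<phi> (E i j) = 0" using i j False by (intro v4) (auto simp: R_def)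
          ultimately show ?thesis using hom by simp
        qed
        then show ?thesis using False by simp
      qed
    qed
    also have "\<dots> = (\<Sum>j\<in>R - {1}. Const (X 1 j) * pv (j - 1))"
      using n by (simp add: sum.delta R_def)
    finally have phiA: "\<phi> ?A = (\<Sum>j\<in>R - {1}. Const (X 1 j) * pv (j - 1))" .
    have "\<phi> ?D = (\<Sum>k=1..n. \<phi> (msmult (c k) (msub (E k k) (E (Suc k) (Suc k)))))"
      by (rule pm) (use Dsl in auto)
    also have "\<dots> = (\<Sum>k=1..n. if k = 1 then Const (c 1) else 0)"
    proof (rule sum.cong[OF refl])
      fix k assume k: "k \<in> {1..n}"
      have s: "msub (E k k) (E (Suc k) (Suc k)) \<in> sl n" using k by (intro sl_Ediff) auto
      show "\<phi> (msmult (c k) (msub (E k k) (E (Suc k) (Suc k)))) = (if k = 1 then Const (c 1) else 0)"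
        using hom s v1 v2[of k] k by (auto simp: numeral_2_eq_2)
    qed
    also have "\<dots> = Const (X 1 1)" using n by (simp add: c_def)
    finally have phiD: "\<phi> ?D = Const (X 1 1)" .
    have "\<phi> X = Const (X 1 1) + (\<Sum>j\<in>R - {1}. Const (X 1 j) * pv (j - 1))"
    proof -
      have "\<phi> (madd ?A ?D) = \<phi> ?A + \<phi> ?D" using add Asl Dgsl by blast
      then have "\<phi> X = \<phi> ?A + \<phi> ?D" by (simp only: dec[symmetric])
      then show ?thesis using phiA phiD by (simp add: add.commute)
    qed
    also have "\<dots> = (\<Sum>b=1..n+1. Const (X 1 b) * wp b)"
    proof -
      have "(\<Sum>b=1..n+1. Const (X 1 b) * wp b) = Const (X 1 1) * wp 1 + (\<Sum>b\<in>R - {1}. Const (X 1 b) * wp b)"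
        unfolding R_def by (subst sum.remove[of _ 1]) auto
      moreover have "(\<Sum>b\<in>R - {1}. Const (X 1 b) * wp b) = (\<Sum>j\<in>R - {1}. Const (X 1 j) * pv (j - 1))"
        by (rule sum.cong) (auto simp: wp_def)
      ultimately show ?thesis by (simp add: wp_def)
    qed
    finally show ?thesis using X by (simp add: phi0_def)
  qed
qed

lemma phi1_eq: "1 \<le> n \<Longrightarrow> phi1 n = phi0 n"
proof -
  assume n: "1 \<le> n"
  have ex: "\<exists>!\<phi>. Pphi n \<phi>" using phi0_P[OF n] Pphi_unique[OF n] by blast
  show ?thesis unfolding phi1_Pphi by (rule the1_equality[OF ex]) (rule phi0_P[OF n])
qed



declare sum.cl_ivl_Suc[simp del]

definition lin :: "nat \<Rightarrow> cmat \<Rightarrow> nat \<Rightarrow> nat mpoly" where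
  "lin n M r = (\<Sum>b=1..n+1. Const (M r b) * wz b)"
definition lam :: "nat \<Rightarrow> complex \<Rightarrow> complex" where
  "lam n aa = (aa + of_nat n + 1) / 2"
definition Op :: "nat \<Rightarrow> nat mpoly \<Rightarrow> (nat \<Rightarrow> nat mpoly) \<Rightarrow> nat mpoly \<Rightarrow> nat mpoly" where
  "Op n c g f = c * f + (\<Sum>j=1..n. g j * pd j f)"
definition gX :: "nat \<Rightarrow> cmat \<Rightarrow> nat \<Rightarrow> nat mpoly" where
  "gX n X j = Var j * lin n X 1 - lin n X (j+1)"

lemma Psi_wp: "a \<in> {1..n+1} \<Longrightarrow> Psi n a b = wp a * Psi_row1 n b"
  by (auto simp: Psi_def wp_def)

lemma Psi_row1_1: "Psi_row1 n 1 = - (\<Sum>j=1..n. pv j * qv j)"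
  by (simp add: Psi_row1_def)
lemma Psi_row1_S: "j \<in> {1..n} \<Longrightarrow> Psi_row1 n (j+1) = qv j"
  by (simp add: Psi_row1_def)

lemma Psi_row1_1': "Psi_row1 n (Suc 0) = - (\<Sum>j=1..n. pv j * qv j)"
  by (simp add: Psi_row1_def)
lemma Psi_row1_S': "Suc 0 \<le> j \<Longrightarrow> j \<le> n \<Longrightarrow> Psi_row1 n (Suc j) = qv j"
  by (simp add: Psi_row1_def)

lemma tilde_expand:
  "tilde n X = (\<Sum>b=1..n+1. (\<Sum>j=1..n. Const (X (j+1) b) * (wp b * qv j))
                    - Const (X 1 b) * (\<Sum>j=1..n. wp b * pv j * qv j))"
proof -
  have "tilde n X = (\<Sum>b=1..n+1. \<Sum>c=1..n+1. wp b * Psi_row1 n c * Const (X c b))"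
    unfolding tilde_def by (intro sum.cong refl) (simp add: Psi_wp)
  also have "\<dots> = (\<Sum>b=1..n+1. wp b * Psi_row1 n 1 * Const (X 1 b)
                      + (\<Sum>j=1..n. wp b * Psi_row1 n (j+1) * Const (X (j+1) b)))"
    by (simp only: sum_split1)
  also have "\<dots> = (\<Sum>b=1..n+1. wp b * (- (\<Sum>j=1..n. pv j * qv j)) * Const (X 1 b)
                      + (\<Sum>j=1..n. wp b * qv j * Const (X (j+1) b)))"
    by (intro sum.cong refl arg_cong2[where f = plus]) (simp_all add: Psi_row1_1 Psi_row1_S Psi_row1_1' Psi_row1_S')
  also have "\<dots> = (\<Sum>b=1..n+1. (\<Sum>j=1..n. Const (X (j+1) b) * (wp b * qv j))
                    - Const (X 1 b) * (\<Sum>j=1..n. wp b * pv j * qv j))"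
    by (intro sum.cong refl) (simp add: sum_distrib_left sum_distrib_right algebra_simps)
  finally show ?thesis .
qed

lemma ii: "Const \<i> * (Const \<i> * Y) = - (Y :: 'v mpoly)"
proof -
  have "Const \<i> * Const \<i> = (Const (-1) :: 'v mpoly)" by (simp add: Const_mult[symmetric])
  then show ?thesis by (simp add: mult.assoc[symmetric] Const_uminus)
qed

lemma W_phi0: "X \<in> sl n \<Longrightarrow> W (phi0 n X) f = lin n X 1 * f"
  by (simp add: phi0_def lin_def W_sum W_Const_mult W_wp sum_distrib_right mult.assoc)

lemma rho_formula:
  assumes n: "1 \<le> n" and X: "X \<in> sl n"
  shows "rho n aa X f = Op n (Const (lam n aa) * lin n X 1) (gX n X) f"
proof -
  define cc where "cc b j = (if b = j+1 then 1 else 1/2 :: complex)" for b j :: nat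
  define dd where "dd b j = (if b = j+1 then 1/2 else 0 :: complex)" for b j :: nat
  have Wq: "\<And>b j. b \<in> {1..n+1} \<Longrightarrow> j \<in> {1..n} \<Longrightarrow>
      W (wp b * qv j) f = Const \<i> * (Const (dd b j) * f + wz b * pd j f)"
    using W_wp_q dd_def by auto
  have Wpq: "\<And>b j. b \<in> {1..n+1} \<Longrightarrow> j \<in> {1..n} \<Longrightarrow>
      W (wp b * pv j * qv j) f = Const \<i> * (Const (cc b j) * wz b * f + wz b * Var j * pd j f)"
    using W_wp_pq cc_def by auto
  define Y where "Y b j = Const (dd b j) * f + wz b * pd j f" for b j
  define Z where "Z b j = Const (cc b j) * wz b * f + wz b * Var j * pd j f" for b j
  have "W (tilde n X) f = (\<Sum>b=1..n+1. (\<Sum>j=1..n. Const (X (j+1) b) * W (wp b * qv j) f)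
                    - Const (X 1 b) * (\<Sum>j=1..n. W (wp b * pv j * qv j) f))"
    by (simp add: tilde_expand W_sum W_diff W_Const_mult)
  also have "\<dots> = (\<Sum>b=1..n+1. (\<Sum>j=1..n. Const (X (j+1) b) * (Const \<i> * Y b j))
                    - Const (X 1 b) * (\<Sum>j=1..n. Const \<i> * Z b j))"
    unfolding Y_def Z_def
    by (intro sum.cong refl arg_cong2[where f = minus] arg_cong2[where f = times]) (simp_all add: Wq Wpq)
  also have "\<dots> = Const \<i> * (\<Sum>b=1..n+1. (\<Sum>j=1..n. Const (X (j+1) b) * Y b j)
                    - Const (X 1 b) * (\<Sum>j=1..n. Z b j))"
    by (simp add: sum_distrib_left right_diff_distrib mult.left_commute)
  finally have Wt: "Const \<i> * W (tilde n X) f = (\<Sum>b=1..n+1. Const (X 1 b) * (\<Sum>j=1..n. Z b j)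
                    - (\<Sum>j=1..n. Const (X (j+1) b) * Y b j))"
    by (simp add: ii sum_negf[symmetric])
  have h1: "(\<Sum>b=1..n+1. Const (X 1 b) * (\<Sum>j=1..n. Z b j))
      = (\<Sum>b=1..n+1. Const (X 1 b * (\<Sum>j=1..n. cc b j)) * wz b) * f + (\<Sum>j=1..n. Var j * lin n X 1 * pd j f)"
  proof -
    have "(\<Sum>b=1..n+1. Const (X 1 b) * (\<Sum>j=1..n. Z b j))
       = (\<Sum>b=1..n+1. Const (X 1 b * (\<Sum>j=1..n. cc b j)) * wz b * f + (\<Sum>j=1..n. Const (X 1 b) * wz b * Var j * pd j f))"
      unfolding Z_def
      by (intro sum.cong refl) (simp add: sum.distrib sum_distrib_left sum_distrib_right Const_mult Const_sum algebra_simps)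
    also have "\<dots> = (\<Sum>b=1..n+1. Const (X 1 b * (\<Sum>j=1..n. cc b j)) * wz b * f) + (\<Sum>b=1..n+1. \<Sum>j=1..n. Const (X 1 b) * wz b * Var j * pd j f)"
      by (rule sum.distrib)
    also have "\<dots> = (\<Sum>b=1..n+1. Const (X 1 b * (\<Sum>j=1..n. cc b j)) * wz b) * f + (\<Sum>j=1..n. \<Sum>b=1..n+1. Const (X 1 b) * wz b * Var j * pd j f)"
    proof -
      have sw: "(\<Sum>b=1..n+1. \<Sum>j=1..n. Const (X 1 b) * wz b * Var j * pd j f) = (\<Sum>j=1..n. \<Sum>b=1..n+1. Const (X 1 b) * wz b * Var j * pd j f)"
        by (rule sum.swap)
      have dr: "(\<Sum>b=1..n+1. Const (X 1 b * (\<Sum>j=1..n. cc b j)) * wz b * f) = (\<Sum>b=1..n+1. Const (X 1 b * (\<Sum>j=1..n. cc b j)) * wz b) * f"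
        by (simp add: sum_distrib_right)
      show ?thesis by (simp only: sw dr)
    qed
    also have "(\<Sum>j=1..n. \<Sum>b=1..n+1. Const (X 1 b) * wz b * Var j * pd j f) = (\<Sum>j=1..n. Var j * lin n X 1 * pd j f)"
      by (intro sum.cong refl) (simp add: lin_def sum_distrib_left sum_distrib_right algebra_simps)
    finally show ?thesis .
  qed
  have h2: "(\<Sum>b=1..n+1. \<Sum>j=1..n. Const (X (j+1) b) * Y b j)
      = Const (\<Sum>b=1..n+1. \<Sum>j=1..n. X (j+1) b * dd b j) * f + (\<Sum>j=1..n. lin n X (j+1) * pd j f)"
  proof -
    have "(\<Sum>b=1..n+1. \<Sum>j=1..n. Const (X (j+1) b) * Y b j)
        = (\<Sum>b=1..n+1. \<Sum>j=1..n. Const (X (j+1) b * dd b j) * f + Const (X (j+1) b) * wz b * pd j f)"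
      unfolding Y_def by (intro sum.cong refl) (simp add: Const_mult algebra_simps)
    also have "\<dots> = Const (\<Sum>b=1..n+1. \<Sum>j=1..n. X (j+1) b * dd b j) * f
        + (\<Sum>j=1..n. \<Sum>b=1..n+1. Const (X (j+1) b) * wz b * pd j f)"
    proof -
      have sw: "(\<Sum>b=1..n+1. \<Sum>j=1..n. Const (X (j+1) b) * wz b * pd j f) = (\<Sum>j=1..n. \<Sum>b=1..n+1. Const (X (j+1) b) * wz b * pd j f)"
        by (rule sum.swap)
      have dr: "(\<Sum>b=1..n+1. \<Sum>j=1..n. Const (X (j+1) b * dd b j) * f) = Const (\<Sum>b=1..n+1. \<Sum>j=1..n. X (j+1) b * dd b j) * f"
        by (simp add: sum_distrib_right Const_sum)
      show ?thesis by (simp only: sum.distrib sw dr)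
    qed
    also have "(\<Sum>j=1..n. \<Sum>b=1..n+1. Const (X (j+1) b) * wz b * pd j f) = (\<Sum>j=1..n. lin n X (j+1) * pd j f)"
      by (intro sum.cong refl) (simp add: lin_def sum_distrib_right)
    finally show ?thesis .
  qed
  have tr: "(\<Sum>j=1..n. X (j+1) (j+1)) = - X 1 1"
  proof -
    have "(\<Sum>b=1..n+1. X b b) = 0" using X by (simp add: sl_def)
    then have "X 1 1 + (\<Sum>j=1..n. X (j+1) (j+1)) = 0" by (simp only: sum_split1)
    then show ?thesis by (metis add.commute add_eq_0_iff2)
  qed
  have h4: "(\<Sum>b=1..n+1. \<Sum>j=1..n. X (j+1) b * dd b j) = - X 1 1 / 2"
  proof -
    have "(\<Sum>b=1..n+1. \<Sum>j=1..n. X (j+1) b * dd b j) = (\<Sum>j=1..n. \<Sum>b=1..n+1. if b = j + 1 then X (j+1) b / 2 else 0)"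
      by (subst sum.swap) (intro sum.cong refl, simp add: dd_def)
    also have "\<dots> = (\<Sum>j=1..n. X (j+1) (j+1) / 2)"
      by (intro sum.cong refl) (simp add: sum.delta)
    also have "\<dots> = - X 1 1 / 2" by (simp add: sum_divide_distrib[symmetric] tr tr[simplified])
    finally show ?thesis .
  qed
  have ccs: "(\<Sum>j=1..n. cc b j) = of_nat n / 2 + (if b = 1 then 0 else 1/2)" if b: "b \<in> {1..n+1}" for b
  proof -
    have "(\<Sum>j=1..n. cc b j) = (\<Sum>j=1..n. 1/2 + (if j = b - 1 \<and> b \<noteq> 1 then 1/2 else 0))"
      using b by (intro sum.cong refl) (auto simp: cc_def)
    also have "\<dots> = of_nat n / 2 + (\<Sum>j=1..n. (if j = b - 1 \<and> b \<noteq> 1 then 1/2 else 0))"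
      by (simp add: sum.distrib)
    also have "(\<Sum>j=1..n. (if j = b - 1 \<and> b \<noteq> 1 then 1/2 else (0::complex))) = (if b = 1 then 0 else 1/2)"
      using b sum.delta[of "{1..n}" "b - 1" "\<lambda>_. 1/2::complex"] by (cases "b = 1") auto
    finally show ?thesis .
  qed
  have h3: "(\<Sum>b=1..n+1. Const (X 1 b * (\<Sum>j=1..n. cc b j)) * wz b)
       = Const ((of_nat n + 1) / 2) * lin n X 1 - Const (X 1 1 / 2)"
  proof -
    have "(\<Sum>b=1..n+1. Const (X 1 b * (\<Sum>j=1..n. cc b j)) * wz b)
       = (\<Sum>b=1..n+1. Const ((of_nat n + 1) / 2) * (Const (X 1 b) * wz b) - (if b = 1 then Const (X 1 1 / 2) else 0))"
    proof (rule sum.cong[OF refl])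
      fix b assume b: "b \<in> {1..n+1}"
      show "Const (X 1 b * (\<Sum>j=1..n. cc b j)) * wz b
          = Const ((of_nat n + 1) / 2) * (Const (X 1 b) * wz b) - (if b = 1 then Const (X 1 1 / 2) else 0)"
      proof (cases "b = 1")
        case True
        have e: "Const ((of_nat n + 1) / 2) * Const (X 1 1) - Const (X 1 1 / 2) = (Const (X 1 1 * (of_nat n / 2 + 0)) :: nat mpoly)"
          by (simp only: Const_mult[symmetric] Const_diff[symmetric], rule arg_cong[where f=Const], simp add: field_simps)
        show ?thesis unfolding ccs[OF b] using True e by (simp add: wz_def)
      next
        case False
        have e: "Const (X 1 b * (of_nat n / 2 + 1/2)) = (Const ((of_nat n + 1) / 2) * Const (X 1 b) :: nat mpoly)"
          by (simp only: Const_mult[symmetric], rule arg_cong[where f=Const], simp add: field_simps)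
        show ?thesis unfolding ccs[OF b] using False e by (simp add: mult.assoc)
      qed
    qed
    also have "\<dots> = Const ((of_nat n + 1) / 2) * lin n X 1 - Const (X 1 1 / 2)"
      by (simp add: sum_subtractf lin_def sum_distrib_left sum.delta)
    finally show ?thesis .
  qed
  have "rho n aa X f = Const \<i> * W (tilde n X) f + Const (aa/2) * W (phi0 n X) f"
    by (simp add: rho_def W_add W_Const_mult phi1_eq[OF n])
  also have "\<dots> = Const ((of_nat n + 1) / 2) * lin n X 1 * f - Const (X 1 1 / 2) * f
       + (\<Sum>j=1..n. Var j * lin n X 1 * pd j f)
       - (Const (- X 1 1 / 2) * f + (\<Sum>j=1..n. lin n X (j+1) * pd j f))
       + Const (aa/2) * (lin n X 1 * f)"
    unfolding Wt W_phi0[OF X] sum_subtractf h1 h2 h3 h4 by (simp add: algebra_simps)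
  also have "\<dots> = Op n (Const (lam n aa) * lin n X 1) (gX n X) f"
    unfolding Op_def gX_def lam_def
    by (simp add: left_diff_distrib sum_subtractf Const_add Const_uminus add_divide_distrib algebra_simps)
  finally show ?thesis .
qed



declare sum.cl_ivl_Suc[simp del]

lemma P_add: "f \<in> Pspace n \<Longrightarrow> g \<in> Pspace n \<Longrightarrow> f + g \<in> Pspace n"
  unfolding Pspace_def using Poly_Mapping.keys_add[of f g] by blast
lemma P_zero: "0 \<in> Pspace n" by (simp add: Pspace_def)
lemma P_uminus: "f \<in> Pspace n \<Longrightarrow> - f \<in> Pspace n"
proof -
  have "ks (- f) = ks f" by (auto simp: in_keys_iff)
  then show "f \<in> Pspace n \<Longrightarrow> - f \<in> Pspace n" by (simp add: Pspace_def)
qed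
lemma P_diff: "f \<in> Pspace n \<Longrightarrow> g \<in> Pspace n \<Longrightarrow> f - g \<in> Pspace n"
  using P_add[of f n "- g"] P_uminus[of g n] by simp
lemma P_mult: "f \<in> Pspace n \<Longrightarrow> g \<in> Pspace n \<Longrightarrow> f * g \<in> Pspace n"
proof -
  assume f: "f \<in> Pspace n" and g: "g \<in> Pspace n"
  have "\<forall>m\<in>ks (f * g). ks m \<subseteq> {1..n}"
  proof
    fix m assume "m \<in> ks (f * g)"
    then obtain a b where m: "m = a + b" and a: "a \<in> ks f" and b: "b \<in> ks g"
      using Poly_Mapping.keys_mult[of f g] by blast
    show "ks m \<subseteq> {1..n}"
      using Poly_Mapping.keys_add[of a b] f g a b m unfolding Pspace_def by blast
  qed
  then show "f * g \<in> Pspace n" by (simp add: Pspace_def)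
qed
lemma P_Const: "Const c \<in> Pspace n" by (simp add: Pspace_def Const_def)
lemma P_Var: "k \<in> {1..n} \<Longrightarrow> Var k \<in> Pspace n" by (simp add: Pspace_def Var_def)
lemma P_sum: "(\<And>x. x \<in> S \<Longrightarrow> g x \<in> Pspace n) \<Longrightarrow> (\<Sum>x\<in>S. g x) \<in> Pspace n"
  by (induction S rule: infinite_finite_induct) (auto simp: P_zero P_add)
lemma P_single: "ks m \<subseteq> {1..n} \<Longrightarrow> sg m c \<in> Pspace n" by (simp add: Pspace_def)
lemma P_pd: "f \<in> Pspace n \<Longrightarrow> pd j f \<in> Pspace n"
  unfolding pd_def
proof (rule P_sum)
  fix m assume f: "f \<in> Pspace n" and m: "m \<in> ks f"
  have "ks (m - sg j 1) \<subseteq> ks m" by (auto simp: in_keys_iff lookup_minus)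
  then show "sg (m - sg j 1) (lk f m * of_nat (lk m j)) \<in> Pspace n"
    using f m by (intro P_single) (auto simp: Pspace_def)
qed
lemma P_wz: "b \<in> {1..n+1} \<Longrightarrow> wz b \<in> Pspace n"
proof -
  assume b: "b \<in> {1..n+1}"
  show ?thesis
  proof (cases "b = 1")
    case True then show ?thesis using P_Const[of 1 n] by (simp add: wz_def)
  next
    case False
    then have "b - 1 \<in> {1..n}" using b by auto
    then show ?thesis using False P_Var[of "b - 1" n] by (simp add: wz_def)
  qed
qed
lemma P_lin: "lin n M r \<in> Pspace n"
  unfolding lin_def by (intro P_sum P_mult P_Const P_wz)

lemma P_Op: "c \<in> Pspace n \<Longrightarrow> (\<And>j. j \<in> {1..n} \<Longrightarrow> g j \<in> Pspace n) \<Longrightarrow> f \<in> Pspace n \<Longrightarrow> Op n c g f \<in> Pspace n"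
  unfolding Op_def by (intro P_add P_mult P_sum P_pd) auto

lemma lin_madd: "lin n (madd X Y) r = lin n X r + lin n Y r"
  by (simp add: lin_def madd_def Const_add distrib_right sum.distrib)
lemma lin_msmult: "lin n (msmult c X) r = Const c * lin n X r"
  by (simp add: lin_def msmult_def Const_mult sum_distrib_left mult.assoc)
lemma lin_msub: "lin n (msub X Y) r = lin n X r - lin n Y r"
  by (simp add: lin_def msub_def Const_diff left_diff_distrib sum_subtractf)

lemma lin_delta: "t \<in> {1..n+1} \<Longrightarrow> (\<And>b. M r b = (if b = t then c else 0)) \<Longrightarrow> lin n M r = Const c * wz t"
proof -
  assume t: "t \<in> {1..n+1}" and M: "\<And>b. M r b = (if b = t then c else 0)"
  have "lin n M r = (\<Sum>b=1..n+1. if b = t then Const c * wz b else 0)"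
    unfolding lin_def M by (intro sum.cong refl) simp
  then show ?thesis using t by (simp add: sum.delta)
qed
lemma lin_zero: "(\<And>b. M r b = 0) \<Longrightarrow> lin n M r = 0"
  by (simp add: lin_def)

lemma wz_1: "wz 1 = 1" by (simp add: wz_def)
lemma wz_S: "1 \<le> j \<Longrightarrow> wz (j+1) = Var j" by (simp add: wz_def)

lemma pd_wz: "1 \<le> j \<Longrightarrow> b \<in> {1..n+1} \<Longrightarrow> pd j (wz b) = Const (if b = j + 1 then 1 else 0)"
  by (auto simp: wz_def pd_Var)

lemma pd_lin: "j \<in> {1..n} \<Longrightarrow> pd j (lin n Y r) = Const (Y r (j+1))"
proof -
  assume j: "j \<in> {1..n}"
  have "pd j (lin n Y r) = (\<Sum>b=1..n+1. Const (Y r b) * pd j (wz b))"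
    by (simp add: lin_def pd_sum pd_Const_mult)
  also have "\<dots> = (\<Sum>b=1..n+1. if b = j + 1 then Const (Y r b) else 0)"
  proof (rule sum.cong[OF refl])
    fix b assume b: "b \<in> {1..n+1}"
    have "pd j (wz b) = Const (if b = j + 1 then 1 else 0)" by (rule pd_wz) (use j b in auto)
    then show "Const (Y r b) * pd j (wz b) = (if b = j + 1 then Const (Y r b) else 0)" by simp
  qed
  also have "\<dots> = Const (Y r (j+1))" using j by (simp add: sum.delta)
  finally show ?thesis .
qed

lemma sum_Var: "(\<Sum>j=1..n. Const (Y r (j+1)) * Var j) = lin n Y r - Const (Y r 1)"
proof -
  have "lin n Y r = Const (Y r 1) * wz 1 + (\<Sum>j=1..n. Const (Y r (j+1)) * wz (j+1))"
    unfolding lin_def by (rule sum_split1)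
  also have "(\<Sum>j=1..n. Const (Y r (j+1)) * wz (j+1)) = (\<Sum>j=1..n. Const (Y r (j+1)) * Var j)"
  proof (rule sum.cong[OF refl])
    fix j assume j: "j \<in> {1..n}"
    have "wz (j+1) = Var j" by (rule wz_S) (use j in auto)
    then show "Const (Y r (j+1)) * wz (j+1) = Const (Y r (j+1)) * Var j" by simp
  qed
  finally show ?thesis by (simp add: wz_1 wz_1[unfolded One_nat_def])
qed

lemma contract: "(\<Sum>b=1..n+1. Const (Y r b) * lin n X b) = lin n (mmult n Y X) r"
proof -
  have "(\<Sum>b=1..n+1. Const (Y r b) * lin n X b) = (\<Sum>b=1..n+1. \<Sum>c=1..n+1. Const (Y r b * X b c) * wz c)"
    by (simp add: lin_def sum_distrib_left Const_mult mult.assoc)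
  also have "\<dots> = (\<Sum>c=1..n+1. \<Sum>b=1..n+1. Const (Y r b * X b c) * wz c)"
    by (rule sum.swap)
  also have "\<dots> = lin n (mmult n Y X) r"
    by (simp add: lin_def mmult_def Const_sum sum_distrib_right)
  finally show ?thesis .
qed

lemma sum_lin: "(\<Sum>j=1..n. Const (Y r (j+1)) * lin n X (j+1)) = lin n (mmult n Y X) r - Const (Y r 1) * lin n X 1"
  using contract[where n=n and Y=Y and r=r and X=X] by (simp only: sum_split1) (simp add: algebra_simps)

definition V :: "nat \<Rightarrow> (nat \<Rightarrow> nat mpoly) \<Rightarrow> nat mpoly \<Rightarrow> nat mpoly" where
  "V n g h = (\<Sum>j=1..n. g j * pd j h)"

lemma Op_V: "Op n c g f = c * f + V n g f" by (simp add: Op_def V_def)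

lemma V_add: "V n g (a + b) = V n g a + V n g b"
  by (simp add: V_def pd_add distrib_left sum.distrib)
lemma V_diff: "V n g (a - b) = V n g a - V n g b"
  by (simp add: V_def pd_diff right_diff_distrib sum_subtractf)
lemma V_mult: "V n g (a * b) = V n g a * b + a * V n g b"
  by (simp add: V_def pd_mult distrib_left sum.distrib sum_distrib_left sum_distrib_right algebra_simps)
lemma V_Const: "V n g (Const c) = 0" by (simp add: V_def)
lemma V_Const_mult: "V n g (Const c * h) = Const c * V n g h"
  by (simp add: V_mult V_Const)
lemma V_Var: "k \<in> {1..n} \<Longrightarrow> V n g (Var k) = g k"
proof -
  assume k: "k \<in> {1..n}"
  have "V n g (Var k) = (\<Sum>j=1..n. if j = k then g j else 0)"
    unfolding V_def by (intro sum.cong refl) (simp add: pd_Var)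
  then show ?thesis using k by (simp add: sum.delta)
qed

lemma VV: "V n g1 (V n g2 f) = (\<Sum>k=1..n. V n g1 (g2 k) * pd k f) + (\<Sum>j=1..n. \<Sum>k=1..n. g1 j * g2 k * pd j (pd k f))"
proof -
  have "V n g1 (V n g2 f) = (\<Sum>j=1..n. \<Sum>k=1..n. g1 j * pd j (g2 k) * pd k f + g1 j * g2 k * pd j (pd k f))"
    by (simp add: V_def pd_sum pd_mult sum_distrib_left distrib_left mult.assoc)
  also have "\<dots> = (\<Sum>j=1..n. \<Sum>k=1..n. g1 j * pd j (g2 k) * pd k f) + (\<Sum>j=1..n. \<Sum>k=1..n. g1 j * g2 k * pd j (pd k f))"
    by (simp add: sum.distrib)
  also have "(\<Sum>j=1..n. \<Sum>k=1..n. g1 j * pd j (g2 k) * pd k f) = (\<Sum>k=1..n. \<Sum>j=1..n. g1 j * pd j (g2 k) * pd k f)"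
    by (rule sum.swap)
  also have "\<dots> = (\<Sum>k=1..n. V n g1 (g2 k) * pd k f)"
    by (simp add: V_def sum_distrib_right)
  finally show ?thesis .
qed

lemma SS_sym: "(\<Sum>j=1..n. \<Sum>k=1..n. gp j * gq k * pd j (pd k f)) = (\<Sum>j=1..n. \<Sum>k=1..n. gq j * gp k * pd j (pd k f))"
proof -
  have "(\<Sum>j=1..n. \<Sum>k=1..n. gq j * gp k * pd j (pd k f)) = (\<Sum>k=1..n. \<Sum>j=1..n. gq j * gp k * pd j (pd k f))"
    by (rule sum.swap)
  also have "\<dots> = (\<Sum>k=1..n. \<Sum>j=1..n. gp k * gq j * pd k (pd j f))"
  proof (intro sum.cong refl)
    fix j k
    show "gq j * gp k * pd j (pd k f) = gp k * gq j * pd k (pd j f)"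
      by (simp only: pd_comm[of j k f] mult.commute[of "gq j" "gp k"])
  qed
  finally show ?thesis by simp
qed

lemma Op_comm:
  "Op n c1 g1 (Op n c2 g2 f) - Op n c2 g2 (Op n c1 g1 f)
   = Op n (V n g1 c2 - V n g2 c1) (\<lambda>k. V n g1 (g2 k) - V n g2 (g1 k)) f"
proof -
  let ?S12 = "(\<Sum>j=1..n. \<Sum>k=1..n. g1 j * g2 k * pd j (pd k f))"
  let ?S21 = "(\<Sum>j=1..n. \<Sum>k=1..n. g2 j * g1 k * pd j (pd k f))"
  have e1: "Op n c1 g1 (Op n c2 g2 f) = c1 * (c2 * f + V n g2 f) + (V n g1 c2 * f + c2 * V n g1 f)
       + (\<Sum>k=1..n. V n g1 (g2 k) * pd k f) + ?S12"
    by (simp add: Op_V V_add V_mult VV)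
  have e2: "Op n c2 g2 (Op n c1 g1 f) = c2 * (c1 * f + V n g1 f) + (V n g2 c1 * f + c1 * V n g2 f)
       + (\<Sum>k=1..n. V n g2 (g1 k) * pd k f) + ?S21"
    by (simp add: Op_V V_add V_mult VV)
  have e3: "Op n (V n g1 c2 - V n g2 c1) (\<lambda>k. V n g1 (g2 k) - V n g2 (g1 k)) f
       = (V n g1 c2 - V n g2 c1) * f + ((\<Sum>k=1..n. V n g1 (g2 k) * pd k f) - (\<Sum>k=1..n. V n g2 (g1 k) * pd k f))"
    by (simp add: Op_def left_diff_distrib sum_subtractf)
  show ?thesis unfolding e1 e2 e3 SS_sym[where n=n and gp=g1 and gq=g2 and f=f] by (simp add: algebra_simps)
qed

lemma V_gX_lin: "V n (gX n X) (lin n Y r) = lin n X 1 * lin n Y r - lin n (mmult n Y X) r"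
proof -
  have "V n (gX n X) (lin n Y r) = (\<Sum>j=1..n. (Var j * lin n X 1 - lin n X (j+1)) * Const (Y r (j+1)))"
    unfolding V_def gX_def by (intro sum.cong refl) (simp add: pd_lin)
  also have "\<dots> = lin n X 1 * (\<Sum>j=1..n. Const (Y r (j+1)) * Var j) - (\<Sum>j=1..n. Const (Y r (j+1)) * lin n X (j+1))"
    by (simp add: left_diff_distrib sum_subtractf sum_distrib_left algebra_simps)
  also have "\<dots> = lin n X 1 * lin n Y r - lin n (mmult n Y X) r"
    unfolding sum_Var sum_lin by (simp add: algebra_simps)
  finally show ?thesis .
qed

lemma V_gX_Var: "k \<in> {1..n} \<Longrightarrow> V n (gX n X) (Var k) = gX n X k"
  by (rule V_Var)

lemma bracket_sl: "X \<in> sl n \<Longrightarrow> Y \<in> sl n \<Longrightarrow> bracket n X Y \<in> sl n"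
proof -
  assume X: "X \<in> sl n" and Y: "Y \<in> sl n"
  have zo: "\<And>i j. (i \<notin> {1..n+1} \<or> j \<notin> {1..n+1}) \<Longrightarrow> bracket n X Y i j = 0"
    using X Y by (auto simp: sl_def bracket_def msub_def mmult_def)
  have "(\<Sum>i=1..n+1. \<Sum>k=1..n+1. Y i k * X k i) = (\<Sum>k=1..n+1. \<Sum>i=1..n+1. Y i k * X k i)"
    by (rule sum.swap)
  then have "(\<Sum>i=1..n+1. bracket n X Y i i) = 0"
    by (simp add: bracket_def msub_def mmult_def sum_subtractf mult.commute)
  then show ?thesis using zo by (simp add: sl_def)
qed

lemma lin_bracket: "lin n (bracket n X Y) r = lin n (mmult n X Y) r - lin n (mmult n Y X) r"
  by (simp add: bracket_def lin_msub)



declare sum.cl_ivl_Suc[simp del]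

lemma Op_cong:
  assumes "c = c'" "\<And>j. j \<in> {1..n} \<Longrightarrow> g j = g' j"
  shows "Op n c g f = Op n c' g' f"
proof -
  have "(\<Sum>j=1..n. g j * pd j f) = (\<Sum>j=1..n. g' j * pd j f)"
    by (rule sum.cong[OF refl]) (simp add: assms(2))
  then show ?thesis by (simp add: Op_def assms(1))
qed

lemma mA_lam: "Const (mA n a) = - Const (lam n a)"
  unfolding mA_def lam_def Const_uminus[symmetric] by (rule arg_cong[where f=Const]) (simp add: field_simps)

lemma c1: "1 \<le> n \<Longrightarrow> \<forall>X\<in>sl n. \<forall>f\<in>Pspace n. rho n a X f \<in> Pspace n"
proof (intro ballI)
  fix X f assume n: "1 \<le> n" and X: "X \<in> sl n" and f: "f \<in> Pspace n"
  show "rho n a X f \<in> Pspace n" unfolding rho_formula[OF n X]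
    by (rule P_Op) (auto simp: gX_def intro!: P_mult P_Const P_lin P_diff P_Var f)
qed

lemma c2: "1 \<le> n \<Longrightarrow> \<forall>X\<in>sl n. \<forall>Y\<in>sl n. \<forall>f\<in>Pspace n.
        rho n a (madd X Y) f = rho n a X f + rho n a Y f"
proof (intro ballI)
  fix X Y f assume n: "1 \<le> n" and X: "X \<in> sl n" and Y: "Y \<in> sl n"
  have XY: "madd X Y \<in> sl n" using X Y by (rule sl_madd)
  show "rho n a (madd X Y) f = rho n a X f + rho n a Y f"
    unfolding rho_formula[OF n X] rho_formula[OF n Y] rho_formula[OF n XY]
    by (simp add: Op_def gX_def lin_madd sum.distrib[symmetric] algebra_simps)
qed

lemma c3: "1 \<le> n \<Longrightarrow> \<forall>X\<in>sl n. \<forall>c. \<forall>f\<in>Pspace n.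
        rho n a (msmult c X) f = Const c * rho n a X f"
proof (intro ballI allI)
  fix X c f assume n: "1 \<le> n" and X: "X \<in> sl n"
  have cX: "msmult c X \<in> sl n" using X by (rule sl_msmult)
  show "rho n a (msmult c X) f = Const c * rho n a X f"
    unfolding rho_formula[OF n X] rho_formula[OF n cX]
    by (simp add: Op_def gX_def lin_msmult algebra_simps sum_distrib_left)
qed

lemma c4: "1 \<le> n \<Longrightarrow> \<forall>X\<in>sl n. \<forall>f\<in>Pspace n. \<forall>g\<in>Pspace n.
        rho n a X (f + g) = rho n a X f + rho n a X g"
proof (intro ballI)
  fix X f g assume n: "1 \<le> n" and X: "X \<in> sl n"
  show "rho n a X (f + g) = rho n a X f + rho n a X g"
    unfolding rho_formula[OF n X]
    by (simp add: Op_def pd_add algebra_simps sum.distrib)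
qed

lemma c5: "1 \<le> n \<Longrightarrow> \<forall>X\<in>sl n. \<forall>c. \<forall>f\<in>Pspace n.
        rho n a X (Const c * f) = Const c * rho n a X f"
proof (intro ballI allI)
  fix X c f assume n: "1 \<le> n" and X: "X \<in> sl n"
  show "rho n a X (Const c * f) = Const c * rho n a X f"
    unfolding rho_formula[OF n X]
    by (simp add: Op_def pd_mult algebra_simps sum_distrib_left)
qed

lemma c6: "1 \<le> n \<Longrightarrow> \<forall>X\<in>sl n. \<forall>Y\<in>sl n. \<forall>f\<in>Pspace n.
        rho n a (bracket n X Y) f = rho n a X (rho n a Y f) - rho n a Y (rho n a X f)"
proof (intro ballI)
  fix X Y f assume n: "1 \<le> n" and X: "X \<in> sl n" and Y: "Y \<in> sl n"
  have B: "bracket n X Y \<in> sl n" using X Y by (rule bracket_sl)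
  have cc: "V n (gX n X) (Const (lam n a) * lin n Y 1) - V n (gX n Y) (Const (lam n a) * lin n X 1)
      = Const (lam n a) * lin n (bracket n X Y) 1"
    by (simp add: V_Const_mult V_gX_lin lin_bracket algebra_simps)
  have gg: "V n (gX n X) (gX n Y k) - V n (gX n Y) (gX n X k) = gX n (bracket n X Y) k"
    if k: "k \<in> {1..n}" for k
  proof -
    have a1: "V n (gX n X) (gX n Y k) = gX n X k * lin n Y 1 + Var k * (lin n X 1 * lin n Y 1 - lin n (mmult n Y X) 1)
        - (lin n X 1 * lin n Y (k+1) - lin n (mmult n Y X) (k+1))"
      by (simp only: gX_def[of n Y k] V_diff V_mult V_Var[OF k] V_gX_lin)
    have a2: "V n (gX n Y) (gX n X k) = gX n Y k * lin n X 1 + Var k * (lin n Y 1 * lin n X 1 - lin n (mmult n X Y) 1)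
        - (lin n Y 1 * lin n X (k+1) - lin n (mmult n X Y) (k+1))"
      by (simp only: gX_def[of n X k] V_diff V_mult V_Var[OF k] V_gX_lin)
    show ?thesis unfolding a1 a2 by (simp add: gX_def lin_bracket algebra_simps)
  qed
  have "rho n a X (rho n a Y f) - rho n a Y (rho n a X f)
      = Op n (Const (lam n a) * lin n X 1) (gX n X) (Op n (Const (lam n a) * lin n Y 1) (gX n Y) f)
      - Op n (Const (lam n a) * lin n Y 1) (gX n Y) (Op n (Const (lam n a) * lin n X 1) (gX n X) f)"
    by (simp only: rho_formula[OF n X] rho_formula[OF n Y])
  also have "\<dots> = Op n (V n (gX n X) (Const (lam n a) * lin n Y 1) - V n (gX n Y) (Const (lam n a) * lin n X 1))
        (\<lambda>k. V n (gX n X) (gX n Y k) - V n (gX n Y) (gX n X k)) f"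
    by (rule Op_comm)
  also have "\<dots> = Op n (Const (lam n a) * lin n (bracket n X Y) 1) (gX n (bracket n X Y)) f"
    by (rule Op_cong[OF cc gg])
  also have "\<dots> = rho n a (bracket n X Y) f"
    by (simp only: rho_formula[OF n B])
  finally show "rho n a (bracket n X Y) f = rho n a X (rho n a Y f) - rho n a Y (rho n a X f)" ..
qed

lemma c7: "1 \<le> n \<Longrightarrow> \<forall>f\<in>Pspace n. \<forall>k\<in>{1..n}.
        rho n a (H k) f = Const (mA n a) * f - Var k * pd k f - (\<Sum>j=1..n. Var j * pd j f)"
proof (intro ballI)
  fix f k assume n: "1 \<le> n" and k: "k \<in> {1..n}"
  have Hs: "H k \<in> sl n" unfolding H_def using k by (intro sl_Ediff) auto
  have l1: "lin n (H k) 1 = - 1"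
  proof -
    have "lin n (H k) 1 = Const (-1) * wz 1"
      by (rule lin_delta) (use n k in \<open>auto simp: H_def msub_def E_def\<close>)
    then show ?thesis using wz_1 by (simp add: Const_uminus)
  qed
  have g: "gX n (H k) j = - Var j - (if j = k then Var k else 0)" if j: "j \<in> {1..n}" for j
  proof (cases "j = k")
    case True
    have "lin n (H k) (j+1) = Const 1 * wz (k+1)"
      by (rule lin_delta) (use k True in \<open>auto simp: H_def msub_def E_def\<close>)
    then show ?thesis using True k l1 wz_S[of k] by (simp add: gX_def)
  next
    case False
    have "lin n (H k) (j+1) = 0"
      by (rule lin_zero) (use False j in \<open>auto simp: H_def msub_def E_def\<close>)
    then show ?thesis using False l1 by (simp add: gX_def)
  qed
  have "rho n a (H k) f = Op n (- Const (lam n a)) (\<lambda>j. - Var j - (if j = k then Var k else 0)) f"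
    unfolding rho_formula[OF n Hs] by (rule Op_cong) (use l1 g in simp_all)
  also have "\<dots> = - Const (lam n a) * f + (\<Sum>j=1..n. - (Var j * pd j f) - (if j = k then Var k * pd k f else 0))"
    unfolding Op_def by (intro arg_cong2[where f = plus] refl sum.cong) auto
  also have "\<dots> = Const (mA n a) * f - Var k * pd k f - (\<Sum>j=1..n. Var j * pd j f)"
    using k by (simp add: sum_subtractf sum_negf sum.delta mA_lam)
  finally show "rho n a (H k) f = Const (mA n a) * f - Var k * pd k f - (\<Sum>j=1..n. Var j * pd j f)" .
qed

lemma c8: "1 \<le> n \<Longrightarrow> \<forall>f\<in>Pspace n. \<forall>k\<in>{1..n}.
        rho n a (E 1 (k+1)) f = - Const (mA n a) * Var k * f + Var k * (\<Sum>j=1..n. Var j * pd j f)"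
proof (intro ballI)
  fix f k assume n: "1 \<le> n" and k: "k \<in> {1..n}"
  have Es: "E 1 (k+1) \<in> sl n" using k by (intro sl_E) auto
  have l1: "lin n (E 1 (k+1)) 1 = Var k"
  proof -
    have "lin n (E 1 (k+1)) 1 = Const 1 * wz (k+1)"
      by (rule lin_delta) (use k in \<open>auto simp: E_def\<close>)
    then show ?thesis using k wz_S[of k] by simp
  qed
  have g: "gX n (E 1 (k+1)) j = Var j * Var k" if j: "j \<in> {1..n}" for j
  proof -
    have "lin n (E 1 (k+1)) (j+1) = 0"
      by (rule lin_zero) (use j in \<open>auto simp: E_def\<close>)
    then show ?thesis using l1 by (simp add: gX_def)
  qed
  have "rho n a (E 1 (k+1)) f = Op n (Const (lam n a) * Var k) (\<lambda>j. Var j * Var k) f"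
    unfolding rho_formula[OF n Es] by (rule Op_cong) (use l1 g in simp_all)
  also have "\<dots> = - Const (mA n a) * Var k * f + Var k * (\<Sum>j=1..n. Var j * pd j f)"
    by (simp add: Op_def mA_lam sum_distrib_left algebra_simps)
  finally show "rho n a (E 1 (k+1)) f = - Const (mA n a) * Var k * f + Var k * (\<Sum>j=1..n. Var j * pd j f)" .
qed

lemma c9: "1 \<le> n \<Longrightarrow> \<forall>f\<in>Pspace n. \<forall>k\<in>{1..n}.
        rho n a (E (k+1) 1) f = - pd k f"
proof (intro ballI)
  fix f k assume n: "1 \<le> n" and k: "k \<in> {1..n}"
  have Es: "E (k+1) 1 \<in> sl n" using k by (intro sl_E) auto
  have l1: "lin n (E (k+1) 1) 1 = 0"
    by (rule lin_zero) (use k in \<open>auto simp: E_def\<close>)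
  have g: "gX n (E (k+1) 1) j = - (if j = k then 1 else 0)" if j: "j \<in> {1..n}" for j
  proof (cases "j = k")
    case True
    have "lin n (E (k+1) 1) (j+1) = Const 1 * wz 1"
      by (rule lin_delta) (use True in \<open>auto simp: E_def\<close>)
    then show ?thesis using True l1 wz_1 by (simp add: gX_def)
  next
    case False
    have "lin n (E (k+1) 1) (j+1) = 0"
      by (rule lin_zero) (use False in \<open>auto simp: E_def\<close>)
    then show ?thesis using False l1 by (simp add: gX_def)
  qed
  have "rho n a (E (k+1) 1) f = Op n 0 (\<lambda>j. - (if j = k then 1 else 0)) f"
    unfolding rho_formula[OF n Es] by (rule Op_cong) (use l1 g in simp_all)
  also have "\<dots> = (\<Sum>j=1..n. - (if j = k then pd k f else 0))"
    unfolding Op_def by (simp, intro sum.cong refl) auto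
  also have "\<dots> = - pd k f"
    using k by (simp add: sum_negf sum.delta)
  finally show "rho n a (E (k+1) 1) f = - pd k f" .
qed

lemma c10: "1 \<le> n \<Longrightarrow> \<forall>f\<in>Pspace n. \<forall>i\<in>{1..n}. \<forall>j\<in>{1..n}. i \<noteq> j \<longrightarrow>
        rho n a (E (i+1) (j+1)) f = - (Var j * pd i f)"
proof (intro ballI impI)
  fix f i j assume n: "1 \<le> n" and i: "i \<in> {1..n}" and j: "j \<in> {1..n}" and ij: "i \<noteq> j"
  have Es: "E (i+1) (j+1) \<in> sl n" using i j ij by (intro sl_E) auto
  have l1: "lin n (E (i+1) (j+1)) 1 = 0"
    by (rule lin_zero) (use i in \<open>auto simp: E_def\<close>)
  have g: "gX n (E (i+1) (j+1)) l = - (if l = i then Var j else 0)" if l: "l \<in> {1..n}" for l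
  proof (cases "l = i")
    case True
    have "lin n (E (i+1) (j+1)) (l+1) = Const 1 * wz (j+1)"
      by (rule lin_delta) (use True j in \<open>auto simp: E_def\<close>)
    then show ?thesis using True j l1 wz_S[of j] by (simp add: gX_def)
  next
    case False
    have "lin n (E (i+1) (j+1)) (l+1) = 0"
      by (rule lin_zero) (use False in \<open>auto simp: E_def\<close>)
    then show ?thesis using False l1 by (simp add: gX_def)
  qed
  have "rho n a (E (i+1) (j+1)) f = Op n 0 (\<lambda>l. - (if l = i then Var j else 0)) f"
    unfolding rho_formula[OF n Es] by (rule Op_cong) (use l1 g in simp_all)
  also have "\<dots> = (\<Sum>l=1..n. - (if l = i then Var j * pd i f else 0))"
    unfolding Op_def by (simp, intro sum.cong refl) auto
  also have "\<dots> = - (Var j * pd i f)"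
    using i by (simp add: sum_negf sum.delta)
  finally show "rho n a (E (i+1) (j+1)) f = - (Var j * pd i f)" .
qed

theorem proposition8p2:
  fixes n :: nat and a :: complex
  assumes "n \<ge> 1"
  shows
    "(\<forall>X\<in>sl n. \<forall>f\<in>Pspace n. rho n a X f \<in> Pspace n)
   \<and> (\<forall>X\<in>sl n. \<forall>Y\<in>sl n. \<forall>f\<in>Pspace n.
        rho n a (madd X Y) f = rho n a X f + rho n a Y f)
   \<and> (\<forall>X\<in>sl n. \<forall>c. \<forall>f\<in>Pspace n.
        rho n a (msmult c X) f = Const c * rho n a X f)
   \<and> (\<forall>X\<in>sl n. \<forall>f\<in>Pspace n. \<forall>g\<in>Pspace n.
        rho n a X (f + g) = rho n a X f + rho n a X g)
   \<and> (\<forall>X\<in>sl n. \<forall>c. \<forall>f\<in>Pspace n.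
        rho n a X (Const c * f) = Const c * rho n a X f)
   \<and> (\<forall>X\<in>sl n. \<forall>Y\<in>sl n. \<forall>f\<in>Pspace n.
        rho n a (bracket n X Y) f = rho n a X (rho n a Y f) - rho n a Y (rho n a X f))
   \<and> (\<forall>f\<in>Pspace n. \<forall>k\<in>{1..n}.
        rho n a (H k) f = Const (mA n a) * f - Var k * pd k f - (\<Sum>j=1..n. Var j * pd j f))
   \<and> (\<forall>f\<in>Pspace n. \<forall>k\<in>{1..n}.
        rho n a (E 1 (k+1)) f = - Const (mA n a) * Var k * f + Var k * (\<Sum>j=1..n. Var j * pd j f))
   \<and> (\<forall>f\<in>Pspace n. \<forall>k\<in>{1..n}.
        rho n a (E (k+1) 1) f = - pd k f)
   \<and> (\<forall>f\<in>Pspace n. \<forall>i\<in>{1..n}. \<forall>j\<in>{1..n}. i \<noteq> j \<longrightarrow>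
        rho n a (E (i+1) (j+1)) f = - (Var j * pd i f))"
  using assms by (intro conjI c1 c2 c3 c4 c5 c6 c7 c8 c9 c10)


end
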